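(* Let $p,q,r$ be pairwise distinct primes with $p<q$ and $p<r$, and write $\Phi_{pqr}(x)=\sum_{n}a_{pqr}(n)x^n$. Put $A_+=\max_n a_{pqr}(n)$ and $A_-=\min_n a_{pqr}(n)$. Let $q',r'\in\{1,\dots,p-1\}$ be the inverses of $q$ and $r$ modulo $p$, let $\alpha=\min\{q',r',p-q',p-r'\}$, and let $\beta$ be the unique integer with $0<\beta<p$ and $\alpha\beta qr\equiv 1 \pmod p$. Then $$A_+\le \min\{2\alpha+\beta,\;p-\beta\},\qquad -A_-\le \min\{p+2\alpha-\beta,\;\beta\}.$$
   Context: $\Phi_{pqr}(x)=\prod_{0<k<pqr,\ \gcd(k,pqr)=1}(x-\zeta^k)$, where $\zeta$ is a primitive $pqr$-th root of unity, is the ternary cyclotomic polynomial; $a_{pqr}(n)$ denotes its coefficient of $x^n$ (zero for $n$ outside $[0,\deg\Phi_{pqr}]$). *)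

theory Defs
  imports Complex_Main "HOL-Computational_Algebra.Polynomial" "HOL-Number_Theory.Cong"
begin

definition cyclo_poly :: "nat \<Rightarrow> complex poly" where
  "cyclo_poly m = (\<Prod>k\<in>{k. 0 < k \<and> k < m \<and> coprime k m}. [:- ((cis (2 * pi / real m)) ^ k), 1:])"

text \<open>Its coefficient of x^n (these are integers; we take the real part to compare them).
  Zero for n beyond the degree, by definition of coeff.\<close>
definition cyclo_coeff :: "nat \<Rightarrow> nat \<Rightarrow> real" where
  "cyclo_coeff m n = Re (coeff (cyclo_poly m) n)"

end

theory Submission
  imports Defs "HOL-Computational_Algebra.Fundamental_Theorem_Algebra"
begin

definition tfun :: "int \<Rightarrow> int \<Rightarrow> int \<Rightarrow> int \<Rightarrow> int \<Rightarrow> int \<Rightarrow> int \<Rightarrow> int" where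
 "tfun P a b s x Y e = (if x + Y + e \<le> s then 1 else 0) - (if (x - b) mod P + Y + e \<le> s then 1 else 0)
     - (if (x - a) mod P + (Y + a) mod P + e \<le> s then 1 else 0) + (if (x - a - b) mod P + (Y + a) mod P + e \<le> s then 1 else 0)"

lemma mod_cases1: "0 \<le> (x::int) \<Longrightarrow> x < P \<Longrightarrow> 0 \<le> b \<Longrightarrow> b \<le> P \<Longrightarrow> (x - b) mod P = (if b \<le> x then x - b else x - b + P)"
proof -
  assume a: "0 \<le> x" "x < P" "0 \<le> b" "b \<le> P"
  show ?thesis
  proof (cases "b \<le> x")
    case True
    have "(x - b) mod P = x - b" using a True by (intro mod_pos_pos_trivial) auto
    thus ?thesis using True by simp
  next
    case False
    have "(x - b) mod P = (x - b + P) mod P" by simp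
    also have "\<dots> = x - b + P" using a False by (intro mod_pos_pos_trivial) auto
    finally show ?thesis using False by simp
  qed
qed

lemma mod_cases2: "0 \<le> (Y::int) \<Longrightarrow> Y < P \<Longrightarrow> 0 \<le> a \<Longrightarrow> a \<le> P \<Longrightarrow> (Y + a) mod P = (if Y + a < P then Y + a else Y + a - P)"
proof -
  assume h: "0 \<le> Y" "Y < P" "0 \<le> a" "a \<le> P"
  show ?thesis
  proof (cases "Y + a < P")
    case True
    have "(Y + a) mod P = Y + a" using h True by (intro mod_pos_pos_trivial) auto
    thus ?thesis using True by simp
  next
    case False
    have "(Y + a) mod P = (Y + a - P) mod P" by (simp add: mod_diff_right_eq[symmetric])
    also have "\<dots> = Y + a - P" using h False by (intro mod_pos_pos_trivial) auto
    finally show ?thesis using False by simp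
  qed
qed

lemma coreA_up:
  assumes "1 \<le> a" "a \<le> b" "a + b \<le> P" "0 \<le> x" "x < P" "0 \<le> Y" "Y < P" "0 \<le> e" "e \<le> 1" "0 \<le> s" "s < P"
  shows "tfun P a b s x Y e \<le> (if x < a \<or> (a + b \<le> x \<and> s + 1 \<le> x \<and> x \<le> a + b + s) then 1 else 0)"
proof -
  have m1: "(x - b) mod P = (if b \<le> x then x - b else x - b + P)" using assms by (intro mod_cases1) auto
  have m2: "(x - a) mod P = (if a \<le> x then x - a else x - a + P)" using assms by (intro mod_cases1) auto
  have m3: "(x - a - b) mod P = (if a + b \<le> x then x - a - b else x - a - b + P)"
    using mod_cases1[of x P "a+b"] assms by (simp add: algebra_simps)
  have m4: "(Y + a) mod P = (if Y + a < P then Y + a else Y + a - P)" using assms by (intro mod_cases2) auto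
  show ?thesis unfolding tfun_def m1 m2 m3 m4 using assms
    by (cases "b \<le> x"; cases "a \<le> x"; cases "a + b \<le> x"; cases "Y + a < P"; simp split: if_split; linarith)
qed

lemma coreA_low:
  assumes "1 \<le> a" "a \<le> b" "a + b \<le> P" "0 \<le> x" "x < P" "0 \<le> Y" "Y < P" "0 \<le> e" "e \<le> 1" "0 \<le> s" "s < P"
  shows "tfun P a b s x Y e \<ge> - (if a \<le> x \<and> x < a + b \<and> s + b + 1 \<le> x + P \<and> (x \<le> a + s \<or> (b \<le> x \<and> x \<le> b + s)) then 1 else 0)"
proof -
  have m1: "(x - b) mod P = (if b \<le> x then x - b else x - b + P)" using assms by (intro mod_cases1) auto
  have m2: "(x - a) mod P = (if a \<le> x then x - a else x - a + P)" using assms by (intro mod_cases1) auto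
  have m3: "(x - a - b) mod P = (if a + b \<le> x then x - a - b else x - a - b + P)"
    using mod_cases1[of x P "a+b"] assms by (simp add: algebra_simps)
  have m4: "(Y + a) mod P = (if Y + a < P then Y + a else Y + a - P)" using assms by (intro mod_cases2) auto
  show ?thesis unfolding tfun_def m1 m2 m3 m4 using assms
    by (cases "b \<le> x"; cases "a \<le> x"; cases "a + b \<le> x"; cases "Y + a < P"; simp split: if_split; linarith)
qed

lemma tfun_sym:
  assumes "0 < P" "0 \<le> x" "x < P" "0 \<le> Y" "Y < P"
  shows "tfun P a b s x Y e = tfun P (P - a) (P - b) s ((x - a - b) mod P) ((Y + a) mod P) e"
proof -
  have 1: "((x - a - b) mod P - (P - b)) mod P = (x - a) mod P"
  proof -
    have "((x - a - b) mod P - (P - b)) mod P = ((x - a - b) - (P - b)) mod P" by (simp add: mod_diff_left_eq)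
    also have "\<dots> = (x - a + (-1) * P) mod P" by (simp add: algebra_simps)
    also have "\<dots> = (x - a) mod P" by (simp only: mod_mult_self1)
    finally show ?thesis .
  qed
  have 2: "((x - a - b) mod P - (P - a)) mod P = (x - b) mod P"
  proof -
    have "((x - a - b) mod P - (P - a)) mod P = ((x - a - b) - (P - a)) mod P" by (simp add: mod_diff_left_eq)
    also have "\<dots> = (x - b + (-1) * P) mod P" by (simp add: algebra_simps)
    also have "\<dots> = (x - b) mod P" by (simp only: mod_mult_self1)
    finally show ?thesis .
  qed
  have 3: "((Y + a) mod P + (P - a)) mod P = Y"
  proof -
    have "((Y + a) mod P + (P - a)) mod P = ((Y + a) + (P - a)) mod P" by (simp add: mod_add_left_eq)
    also have "\<dots> = (Y + 1 * P) mod P" by (simp add: algebra_simps)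
    also have "\<dots> = Y mod P" by (simp only: mod_mult_self1)
    also have "\<dots> = Y" using assms by simp
    finally show ?thesis .
  qed
  have 4: "((x - a - b) mod P - (P - a) - (P - b)) mod P = x"
  proof -
    have "((x - a - b) mod P - (P - a) - (P - b)) mod P = ((x - a - b) mod P - ((P - a) + (P - b))) mod P" by (simp add: algebra_simps)
    also have "\<dots> = ((x - a - b) - ((P - a) + (P - b))) mod P" by (simp add: mod_diff_left_eq)
    also have "\<dots> = (x + (-2) * P) mod P" by (simp add: algebra_simps)
    also have "\<dots> = x mod P" by (simp only: mod_mult_self1)
    also have "\<dots> = x" using assms by simp
    finally show ?thesis .
  qed
  show ?thesis unfolding tfun_def 1 2 3 4 by simp
qed

lemma mul_le_small: "0 < (p::int) \<Longrightarrow> 0 \<le> z \<Longrightarrow> z < p \<Longrightarrow> (p*j \<le> z \<longleftrightarrow> j \<le> 0)"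
proof
  assume h: "0 < p" "0 \<le> z" "z < p" "p*j \<le> z"
  show "j \<le> 0"
  proof (rule ccontr)
    assume "\<not> j \<le> 0" hence "1 \<le> j" by simp
    hence "p*1 \<le> p*j" using h by (intro mult_left_mono) auto
    thus False using h by linarith
  qed
next
  assume h: "0 < p" "0 \<le> z" "z < p" "j \<le> 0"
  hence "p*j \<le> p*0" by (intro mult_left_mono) auto
  thus "p*j \<le> z" using h by simp
qed

lemma mul_le_mid: "0 < (p::int) \<Longrightarrow> p \<le> z \<Longrightarrow> z < 2*p \<Longrightarrow> (p*j \<le> z \<longleftrightarrow> j \<le> 1)"
proof
  assume h: "0 < p" "p \<le> z" "z < 2*p" "p*j \<le> z"
  show "j \<le> 1"
  proof (rule ccontr)
    assume "\<not> j \<le> 1" hence "2 \<le> j" by simp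
    hence "p*2 \<le> p*j" using h by (intro mult_left_mono) auto
    thus False using h by linarith
  qed
next
  assume h: "0 < p" "p \<le> z" "z < 2*p" "j \<le> 1"
  hence "p*j \<le> p*1" by (intro mult_left_mono) auto
  thus "p*j \<le> z" using h by linarith
qed

definition ind :: "bool \<Rightarrow> int" where "ind b = (if b then 1 else 0)"

lemma modc1: "0 \<le> (x::int) \<Longrightarrow> x < P \<Longrightarrow> 0 \<le> b \<Longrightarrow> b \<le> P \<Longrightarrow> (x - b) mod P = x - b + P * ind (x < b)"
  using mod_cases1[of x P b] by (auto simp: ind_def)

lemma modc2: "0 \<le> (Y::int) \<Longrightarrow> Y < P \<Longrightarrow> 0 \<le> a \<Longrightarrow> a \<le> P \<Longrightarrow> (Y + a) mod P = Y + a - P * ind (\<not> Y + a < P)"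
  using mod_cases2[of Y P a] by (auto simp: ind_def)

lemma div_lt_iff: "0 < (q::int) \<Longrightarrow> (a div q < c \<longleftrightarrow> a < c * q)"
proof
  assume h: "0 < q" "a div q < c"
  have "a = q * (a div q) + a mod q" by simp
  moreover have "a mod q < q" using h by simp
  moreover have "q * (a div q) \<le> q * (c - 1)" using h by (intro mult_left_mono) auto
  moreover have "q * (c - 1) = c * q - q" by (simp add: algebra_simps)
  ultimately show "a < c * q" by linarith
next
  assume h: "0 < q" "a < c * q"
  show "a div q < c"
  proof (rule ccontr)
    assume "\<not> a div q < c"
    hence "q * c \<le> q * (a div q)" using h by (intro mult_left_mono) auto
    moreover have "a = q * (a div q) + a mod q" by simp
    moreover have "a mod q \<ge> 0" using h by simp
    moreover have "q * c = c * q" by simp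
    ultimately show False using h by linarith
  qed
qed

locale tern =
  fixes p q r qq rr iy iz :: int
  assumes p2: "2 \<le> p" and pq: "p < q" and pr: "p < r"
    and cpq: "coprime p q" and cpr: "coprime p r" and cqr: "coprime q r"
    and qq1: "1 \<le> qq" and qq2: "qq < p" and qqinv: "(q*qq) mod p = 1"
    and rr1: "1 \<le> rr" and rr2: "rr < p" and rrinv: "(r*rr) mod p = 1"
    and iyinv: "(p*r*iy) mod q = 1" and izinv: "(p*q*iz) mod r = 1"
begin

definition "N = p*q*r"
definition "xc k = (k*qq*rr) mod p"
definition "yc k = (k*iy) mod q"
definition "zc k = (k*iz) mod r"
definition "Rv k = xc k*(q*r) + yc k*(p*r) + zc k*(p*q)"
definition "Gz k = (if Rv k \<le> k then 1 else 0 :: int)"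
definition "mm k = (Rv k - k) div N"
definition "rho1 = (r*iy) mod q"
definition "rho2 = (q*iz) mod r"

lemma pos: "0 < p" "0 < q" "0 < r" "0 < N" "0 < q*r"
  using p2 pq pr by (auto simp: N_def)

lemma xc_rng: "0 \<le> xc k" "xc k < p" using pos by (auto simp: xc_def)
lemma yc_rng: "0 \<le> yc k" "yc k < q" using pos by (auto simp: yc_def)
lemma zc_rng: "0 \<le> zc k" "zc k < r" using pos by (auto simp: zc_def)
lemma rho_rng: "0 \<le> rho1" "rho1 < q" "0 \<le> rho2" "rho2 < r" using pos by (auto simp: rho1_def rho2_def)

lemma dvd_p: "p dvd (Rv k - k)"
proof -
  have "[xc k * (q*r) = k*qq*rr*(q*r)] (mod p)" unfolding xc_def cong_def by (simp add: mod_mult_left_eq)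
  also have "k*qq*rr*(q*r) = k*(q*qq)*(r*rr)" by (simp add: algebra_simps)
  also have "[k*(q*qq)*(r*rr) = k*1*1] (mod p)"
    using qqinv rrinv pos p2 by (intro cong_mult cong_refl) (auto simp: cong_def)
  finally have 1: "[xc k * (q*r) = k] (mod p)" by simp
  have 2: "[yc k*(p*r) + zc k*(p*q) = 0] (mod p)" by (simp add: cong_def algebra_simps)
  have "[Rv k = k + 0] (mod p)" unfolding Rv_def using cong_add[OF 1 2] by (simp add: algebra_simps)
  thus ?thesis by (simp add: cong_iff_dvd_diff dvd_diff_commute)
qed

lemma dvd_q: "q dvd (Rv k - k)"
proof -
  have "[yc k * (p*r) = k*iy*(p*r)] (mod q)" unfolding yc_def cong_def by (simp add: mod_mult_left_eq)
  also have "k*iy*(p*r) = k*(p*r*iy)" by (simp add: algebra_simps)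
  also have "[k*(p*r*iy) = k*1] (mod q)"
    using iyinv pos p2 pq by (intro cong_mult cong_refl) (auto simp: cong_def)
  finally have 1: "[yc k * (p*r) = k] (mod q)" by simp
  have 2: "[xc k*(q*r) + zc k*(p*q) = 0] (mod q)" by (simp add: cong_def algebra_simps)
  have "[Rv k = k + 0] (mod q)" unfolding Rv_def using cong_add[OF 1 2] by (simp add: algebra_simps)
  thus ?thesis by (simp add: cong_iff_dvd_diff dvd_diff_commute)
qed

lemma dvd_r: "r dvd (Rv k - k)"
proof -
  have "[zc k * (p*q) = k*iz*(p*q)] (mod r)" unfolding zc_def cong_def by (simp add: mod_mult_left_eq)
  also have "k*iz*(p*q) = k*(p*q*iz)" by (simp add: algebra_simps)
  also have "[k*(p*q*iz) = k*1] (mod r)"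
    using izinv pos p2 pr by (intro cong_mult cong_refl) (auto simp: cong_def)
  finally have 1: "[zc k * (p*q) = k] (mod r)" by simp
  have 2: "[xc k*(q*r) + yc k*(p*r) = 0] (mod r)" by (simp add: cong_def algebra_simps)
  have "[Rv k = k + 0] (mod r)" unfolding Rv_def using cong_add[OF 1 2] by (simp add: algebra_simps)
  thus ?thesis by (simp add: cong_iff_dvd_diff dvd_diff_commute)
qed

lemma dvdN_gen: "p dvd a \<Longrightarrow> q dvd a \<Longrightarrow> r dvd a \<Longrightarrow> N dvd a"
proof -
  assume h: "p dvd a" "q dvd a" "r dvd a"
  have "p*q dvd a" using h cpq by (intro divides_mult) auto
  moreover have "coprime (p*q) r" using cpr cqr by simp
  ultimately show ?thesis using h unfolding N_def by (intro divides_mult[of "p*q" a r]) auto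
qed

lemma Rv_eq: "Rv k = k + N * mm k"
proof -
  have "N dvd (Rv k - k)" using dvd_p dvd_q dvd_r by (intro dvdN_gen)
  thus ?thesis unfolding mm_def by (simp add: dvd_div_mult_self algebra_simps)
qed

lemma Gz_mm: "Gz k = (if mm k \<le> 0 then 1 else 0)"
proof -
  have "Rv k \<le> k \<longleftrightarrow> N * mm k \<le> 0" using Rv_eq[of k] by simp
  also have "\<dots> \<longleftrightarrow> mm k \<le> 0" using pos by (simp add: mult_le_0_iff)
  finally show ?thesis unfolding Gz_def by simp
qed


lemma modeq1: "(a::int) mod m = 1 \<Longrightarrow> m dvd (a - 1)"
  by (metis cong_def cong_iff_dvd_diff mod_mod_trivial)

lemma Lq: "rr*(q*r) + rho2*(p*q) = N + q"
proof -
  define V where "V = rr*(q*r) + rho2*(p*q)"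
  have a1: "p dvd (r*rr - 1)" using modeq1[OF rrinv] .
  have "p dvd (q*(r*rr - 1) + p*(rho2*q))" using a1 by simp
  hence dp: "p dvd (V - q)" unfolding V_def by (simp add: algebra_simps)
  have dq: "q dvd (V - q)" unfolding V_def by (simp add: algebra_simps)
  have b1: "r dvd (p*q*iz - 1)" using modeq1[OF izinv] .
  have b2: "r dvd (rho2 - q*iz)" unfolding rho2_def by (simp add: mod_eq_dvd_iff[symmetric])
  have "r dvd (q*(p*q*iz - 1) + (p*q)*(rho2 - q*iz) + r*(rr*q))" using b1 b2 by simp
  hence dr: "r dvd (V - q)" unfolding V_def by (simp add: algebra_simps)
  have "N dvd (V - q)" using dp dq dr by (rule dvdN_gen)
  then obtain j where j: "V - q = N * j" by blast
  have lo: "V - q > 0"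
  proof -
    have "rr*(q*r) \<ge> 1*(q*r)" using rr1 pos by (intro mult_right_mono) auto
    moreover have "rho2*(p*q) \<ge> 0" using rho_rng pos by simp
    moreover have "q*r > q" using pos pr p2 by simp
    ultimately show ?thesis unfolding V_def by linarith
  qed
  have hi: "V - q < 2*N"
  proof -
    have "rr*(q*r) \<le> (p - 1)*(q*r)" using rr2 pos by (intro mult_right_mono) auto
    moreover have "rho2*(p*q) \<le> (r - 1)*(p*q)" using rho_rng pos by (intro mult_right_mono) auto
    ultimately have "V \<le> (p - 1)*(q*r) + (r - 1)*(p*q)" unfolding V_def by linarith
    also have "\<dots> = 2*N - q*r - p*q" by (simp add: N_def algebra_simps)
    finally show ?thesis using pos by (smt (verit) mult_pos_pos)
  qed
  have "j = 1"
  proof -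
    have "N*j > N*0" using lo j by simp
    hence "j > 0" using pos by (simp add: zero_less_mult_iff)
    moreover have "N*j < N*2" using hi j by (simp add: algebra_simps)
    hence "j < 2" using pos by (simp add: mult_less_cancel_left)
    ultimately show ?thesis by simp
  qed
  thus ?thesis using j unfolding V_def by simp
qed

lemma Lr: "qq*(q*r) + rho1*(p*r) = N + r"
proof -
  define V where "V = qq*(q*r) + rho1*(p*r)"
  have a1: "p dvd (q*qq - 1)" using modeq1[OF qqinv] .
  have "p dvd (r*(q*qq - 1) + p*(rho1*r))" using a1 by simp
  hence dp: "p dvd (V - r)" unfolding V_def by (simp add: algebra_simps)
  have dr: "r dvd (V - r)" unfolding V_def by (simp add: algebra_simps)
  have b1: "q dvd (p*r*iy - 1)" using modeq1[OF iyinv] .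
  have b2: "q dvd (rho1 - r*iy)" unfolding rho1_def by (simp add: mod_eq_dvd_iff[symmetric])
  have "q dvd (r*(p*r*iy - 1) + (p*r)*(rho1 - r*iy) + q*(qq*r))" using b1 b2 by simp
  hence dq: "q dvd (V - r)" unfolding V_def by (simp add: algebra_simps)
  have "N dvd (V - r)" using dp dq dr by (rule dvdN_gen)
  then obtain j where j: "V - r = N * j" by blast
  have lo: "V - r > 0"
  proof -
    have "qq*(q*r) \<ge> 1*(q*r)" using qq1 pos by (intro mult_right_mono) auto
    moreover have "rho1*(p*r) \<ge> 0" using rho_rng pos by simp
    moreover have "q*r > r" using pos pq p2 by simp
    ultimately show ?thesis unfolding V_def by linarith
  qed
  have hi: "V - r < 2*N"
  proof -
    have "qq*(q*r) \<le> (p - 1)*(q*r)" using qq2 pos by (intro mult_right_mono) auto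
    moreover have "rho1*(p*r) \<le> (q - 1)*(p*r)" using rho_rng pos by (intro mult_right_mono) auto
    ultimately have "V \<le> (p - 1)*(q*r) + (q - 1)*(p*r)" unfolding V_def by linarith
    also have "\<dots> = 2*N - q*r - p*r" by (simp add: N_def algebra_simps)
    finally show ?thesis using pos by (smt (verit) mult_pos_pos)
  qed
  have "j = 1"
  proof -
    have "N*j > N*0" using lo j by simp
    hence "j > 0" using pos by (simp add: zero_less_mult_iff)
    moreover have "N*j < N*2" using hi j by (simp add: algebra_simps)
    hence "j < 2" using pos by (simp add: mult_less_cancel_left)
    ultimately show ?thesis by simp
  qed
  thus ?thesis using j unfolding V_def by simp
qed


lemma xc_q: "xc (k - q) = (xc k - rr) mod p"
proof -
  have "xc (k - q) = (k*qq*rr - (q*qq)*rr) mod p" unfolding xc_def by (simp add: algebra_simps)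
  also have "\<dots> = (k*qq*rr - ((q*qq) mod p)*rr) mod p" by (metis mod_diff_right_eq mod_mult_left_eq)
  also have "\<dots> = ((k*qq*rr) mod p - rr) mod p" using qqinv by (simp add: mod_diff_left_eq)
  finally show ?thesis unfolding xc_def .
qed

lemma xc_r: "xc (k - r) = (xc k - qq) mod p"
proof -
  have "xc (k - r) = (k*qq*rr - (r*rr)*qq) mod p" unfolding xc_def by (simp add: algebra_simps)
  also have "\<dots> = (k*qq*rr - ((r*rr) mod p)*qq) mod p" by (metis mod_diff_right_eq mod_mult_left_eq)
  also have "\<dots> = ((k*qq*rr) mod p - qq) mod p" using rrinv by (simp add: mod_diff_left_eq)
  finally show ?thesis unfolding xc_def .
qed

lemma yc_q: "yc (k - q) = yc k"
proof -
  have "(k - q)*iy = k*iy - (q*iy)" by (simp add: algebra_simps)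
  hence "yc (k - q) = (k*iy - (q*iy) mod q) mod q" unfolding yc_def by (metis mod_diff_right_eq)
  thus ?thesis unfolding yc_def by simp
qed

lemma zc_r: "zc (k - r) = zc k"
proof -
  have "(k - r)*iz = k*iz - (r*iz)" by (simp add: algebra_simps)
  hence "zc (k - r) = (k*iz - (r*iz) mod r) mod r" unfolding zc_def by (metis mod_diff_right_eq)
  thus ?thesis unfolding zc_def by simp
qed

lemma zc_q: "zc (k - q) = (zc k - rho2) mod r"
proof -
  have "zc (k - q) = (k*iz - q*iz) mod r" unfolding zc_def by (simp add: algebra_simps)
  also have "\<dots> = (k*iz - (q*iz) mod r) mod r" by (simp add: mod_diff_right_eq)
  also have "\<dots> = ((k*iz) mod r - rho2) mod r" unfolding rho2_def by (simp add: mod_diff_left_eq)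
  finally show ?thesis unfolding zc_def .
qed

lemma yc_r: "yc (k - r) = (yc k - rho1) mod q"
proof -
  have "yc (k - r) = (k*iy - r*iy) mod q" unfolding yc_def by (simp add: algebra_simps)
  also have "\<dots> = (k*iy - (r*iy) mod q) mod q" by (simp add: mod_diff_right_eq)
  also have "\<dots> = ((k*iy) mod q - rho1) mod q" unfolding rho1_def by (simp add: mod_diff_left_eq)
  finally show ?thesis unfolding yc_def .
qed

lemma mm_q: "mm (k - q) = mm k - 1 + ind (xc k < rr) + ind (zc k < rho2)"
proof -
  have x: "xc (k - q) = xc k - rr + p * ind (xc k < rr)"
    unfolding xc_q using xc_rng rr1 rr2 by (intro modc1) auto
  have z: "zc (k - q) = zc k - rho2 + r * ind (zc k < rho2)"
    unfolding zc_q using zc_rng rho_rng by (intro modc1) auto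
  have "Rv (k - q) = Rv k - (rr*(q*r) + rho2*(p*q)) + N * (ind (xc k < rr) + ind (zc k < rho2))"
    unfolding Rv_def x z yc_q by (simp add: N_def algebra_simps)
  also have "\<dots> = Rv k - N - q + N * (ind (xc k < rr) + ind (zc k < rho2))" using Lq by simp
  finally have "N * mm (k - q) = N * (mm k - 1 + ind (xc k < rr) + ind (zc k < rho2))"
    using Rv_eq[of k] Rv_eq[of "k - q"] by (simp add: algebra_simps)
  thus ?thesis using pos by simp
qed

lemma mm_r: "mm (k - r) = mm k - 1 + ind (xc k < qq) + ind (yc k < rho1)"
proof -
  have x: "xc (k - r) = xc k - qq + p * ind (xc k < qq)"
    unfolding xc_r using xc_rng qq1 qq2 by (intro modc1) auto
  have y: "yc (k - r) = yc k - rho1 + q * ind (yc k < rho1)"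
    unfolding yc_r using yc_rng rho_rng by (intro modc1) auto
  have "Rv (k - r) = Rv k - (qq*(q*r) + rho1*(p*r)) + N * (ind (xc k < qq) + ind (yc k < rho1))"
    unfolding Rv_def x y zc_r by (simp add: N_def algebra_simps)
  also have "\<dots> = Rv k - N - r + N * (ind (xc k < qq) + ind (yc k < rho1))" using Lr by simp
  finally have "N * mm (k - r) = N * (mm k - 1 + ind (xc k < qq) + ind (yc k < rho1))"
    using Rv_eq[of k] Rv_eq[of "k - r"] by (simp add: algebra_simps)
  thus ?thesis using pos by simp
qed


definition "Yh k = (p * yc k) div q"
definition "Zh k = (p * zc k) div r"

lemma Yh_rng: "0 \<le> Yh k" "Yh k < p"
proof -
  show "0 \<le> Yh k" unfolding Yh_def using yc_rng[of k] pos by (simp add: pos_imp_zdiv_nonneg_iff)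
  have "p * yc k < p * q" using yc_rng pos by simp
  thus "Yh k < p" unfolding Yh_def using pos div_lt_iff by (simp add: algebra_simps)
qed

lemma Zh_rng: "0 \<le> Zh k" "Zh k < p"
proof -
  show "0 \<le> Zh k" unfolding Zh_def using zc_rng[of k] pos by (simp add: pos_imp_zdiv_nonneg_iff)
  have "p * zc k < p * r" using zc_rng pos by simp
  thus "Zh k < p" unfolding Zh_def using pos div_lt_iff by (simp add: algebra_simps)
qed

lemma rho1_eq: "qq*q + rho1*p = p*q + 1"
proof -
  have "r * (qq*q + rho1*p) = r * (p*q + 1)" using Lr by (simp add: N_def algebra_simps)
  thus ?thesis using pos by simp
qed

lemma rho2_eq: "rr*r + rho2*p = p*r + 1"
proof -
  have "q * (rr*r + rho2*p) = q * (p*r + 1)" using Lq by (simp add: N_def algebra_simps)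
  thus ?thesis using pos by simp
qed

lemma b_lemma: "yc k < rho1 \<longleftrightarrow> Yh k + qq < p"
proof -
  define y where "y = yc k"
  have yr: "0 \<le> y" "y < q" using yc_rng unfolding y_def by auto
  have "y < rho1 \<longleftrightarrow> p*y < p*rho1" using pos by simp
  also have "\<dots> \<longleftrightarrow> p*y \<le> q*(p - qq)"
  proof -
    have h: "p*rho1 = p*q + 1 - qq*q" using rho1_eq by (simp add: algebra_simps)
    have h2: "q*(p - qq) = p*q - qq*q" by (simp add: algebra_simps)
    show ?thesis by (simp only: h h2, arith)
  qed
  also have "\<dots> \<longleftrightarrow> p*y < q*(p - qq)"
  proof -
    have "p*y \<noteq> q*(p - qq)"
    proof
      assume h: "p*y = q*(p - qq)"
      hence "q dvd p*y" by simp
      hence "q dvd y" using cpq by (simp add: coprime_commute coprime_dvd_mult_right_iff)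
      hence "y = 0" using yr zdvd_not_zless[of y q] by (cases "y = 0") auto
      thus False using h pos qq2 by simp
    qed
    thus ?thesis by auto
  qed
  also have "\<dots> \<longleftrightarrow> (p*y) div q < p - qq" using div_lt_iff[of q "p*y" "p-qq"] pos by (simp add: mult.commute)
  finally show ?thesis unfolding y_def Yh_def by linarith
qed

lemma c_lemma: "zc k < rho2 \<longleftrightarrow> Zh k + rr < p"
proof -
  define z where "z = zc k"
  have zr: "0 \<le> z" "z < r" using zc_rng unfolding z_def by auto
  have "z < rho2 \<longleftrightarrow> p*z < p*rho2" using pos by simp
  also have "\<dots> \<longleftrightarrow> p*z \<le> r*(p - rr)"
  proof -
    have h: "p*rho2 = p*r + 1 - rr*r" using rho2_eq by (simp add: algebra_simps)
    have h2: "r*(p - rr) = p*r - rr*r" by (simp add: algebra_simps)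
    show ?thesis by (simp only: h h2, arith)
  qed
  also have "\<dots> \<longleftrightarrow> p*z < r*(p - rr)"
  proof -
    have "p*z \<noteq> r*(p - rr)"
    proof
      assume h: "p*z = r*(p - rr)"
      hence "r dvd p*z" by simp
      hence "r dvd z" using cpr by (simp add: coprime_commute coprime_dvd_mult_right_iff)
      hence "z = 0" using zr zdvd_not_zless[of z r] by (cases "z = 0") auto
      thus False using h pos rr2 by simp
    qed
    thus ?thesis by auto
  qed
  also have "\<dots> \<longleftrightarrow> (p*z) div r < p - rr" using div_lt_iff[of r "p*z" "p-rr"] pos by (simp add: mult.commute)
  finally show ?thesis unfolding z_def Zh_def by linarith
qed

definition "ee s k = p * mm k + s - xc k - Yh k - Zh k"

lemma ee_rng:
  assumes "0 \<le> n" "n - p < k" "k \<le> n" "s = n div (q*r)"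
  shows "0 \<le> ee s k" "ee s k \<le> 1"
proof -
  define eta where "eta = (p * yc k) mod q"
  define zeta where "zeta = (p * zc k) mod r"
  have y: "p * yc k = q * Yh k + eta" unfolding eta_def Yh_def by simp
  have z: "p * zc k = r * Zh k + zeta" unfolding zeta_def Zh_def by simp
  have er: "0 \<le> eta" "eta < q" "0 \<le> zeta" "zeta < r" using pos unfolding eta_def zeta_def by auto
  have "Rv k = (q*r) * (xc k + Yh k + Zh k) + r*eta + q*zeta"
  proof -
    have "Rv k = xc k*(q*r) + r*(p * yc k) + q*(p * zc k)" unfolding Rv_def by (simp add: algebra_simps)
    also have "\<dots> = (q*r) * (xc k + Yh k + Zh k) + r*eta + q*zeta" unfolding y z by (simp add: algebra_simps)
    finally show ?thesis .
  qed
  hence key: "(q*r) * ee s k = (q*r)*s - k + r*eta + q*zeta"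
    using Rv_eq[of k] unfolding ee_def N_def by (simp add: algebra_simps)
  have ndiv: "n = (q*r) * s + n mod (q*r)" using assms by simp
  have nm: "0 \<le> n mod (q*r)" "n mod (q*r) < q*r" using pos by auto
  have "(q*r) * ee s k > (q*r) * (-1)"
  proof -
    have "r*eta \<ge> 0" "q*zeta \<ge> 0" using er pos by auto
    hence "(q*r) * ee s k \<ge> (q*r)*s - k" using key by linarith
    moreover have "(q*r)*s - k \<ge> (q*r)*s - n" using assms by linarith
    moreover have "(q*r)*s - n > - (q*r)" using ndiv nm by linarith
    ultimately show ?thesis by simp
  qed
  moreover have "0 \<le> q*r" using pos by simp
  ultimately have "ee s k > -1" by (rule mult_left_less_imp_less)
  thus "0 \<le> ee s k" by simp
  have "(q*r) * ee s k < (q*r) * 2"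
  proof -
    have "r*eta \<le> r*(q - 1)" using er pos by (intro mult_left_mono) auto
    moreover have "q*zeta \<le> q*(r - 1)" using er pos by (intro mult_left_mono) auto
    moreover have "r*(q - 1) + q*(r - 1) = 2*(q*r) - q - r" by (simp add: algebra_simps)
    ultimately have "(q*r) * ee s k \<le> (q*r)*s - k + 2*(q*r) - q - r" using key by linarith
    moreover have "(q*r)*s - k < (q*r)*s - n + p" using assms by linarith
    moreover have "(q*r)*s - n \<le> 0" using ndiv nm by linarith
    ultimately show ?thesis using pq pr pos by linarith
  qed
  moreover have "0 \<le> q*r" using pos by simp
  ultimately have "ee s k < 2" by (rule mult_left_less_imp_less)
  thus "ee s k \<le> 1" by simp
qed

end

lemma mul_le_c: "0 < (p::int) \<Longrightarrow> 0 \<le> Z \<Longrightarrow> Z < p \<Longrightarrow> 0 \<le> b \<Longrightarrow> b < p \<Longrightarrow>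
   (p*j \<le> Z + b \<longleftrightarrow> j + ind (Z + b < p) - 1 \<le> 0)"
proof -
  assume h: "0 < p" "0 \<le> Z" "Z < p" "0 \<le> b" "b < p"
  show ?thesis
  proof (cases "Z + b < p")
    case True thus ?thesis using mul_le_small[of p "Z+b" j] h by (simp add: ind_def)
  next
    case False thus ?thesis using mul_le_mid[of p "Z+b" j] h by (simp add: ind_def)
  qed
qed

context tern begin

lemma tG_eq:
  assumes "0 \<le> n" "n - p < k" "k \<le> n" "s = n div (q*r)"
  shows "tfun p qq rr s (xc k) (Yh k) (ee s k) = Gz k - Gz (k - q) - Gz (k - r) + Gz (k - r - q)"
proof -
  define x where "x = xc k"
  define Y where "Y = Yh k"
  define Z where "Z = Zh k"
  define E where "E = ee s k"
  define m where "m = mm k"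
  have xr: "0 \<le> x" "x < p" using xc_rng unfolding x_def by auto
  have Yr: "0 \<le> Y" "Y < p" using Yh_rng unfolding Y_def by auto
  have Zr: "0 \<le> Z" "Z < p" using Zh_rng unfolding Z_def by auto
  have Ed: "x + Y + E - s = p*m - Z" unfolding x_def Y_def Z_def E_def m_def ee_def by simp
  have pp: "0 < p" using pos by simp
  define i1 where "i1 = ind (x < rr)"
  define i2 where "i2 = ind (Z + rr < p)"
  define i3 where "i3 = ind (x < qq)"
  define ib where "ib = ind (Y + qq < p)"
  have mq: "mm (k - q) = m - 1 + i1 + i2"
    unfolding mm_q i1_def i2_def x_def m_def Z_def using c_lemma by simp
  have mr: "mm (k - r) = m - 1 + i3 + ib"
    unfolding mm_r i3_def ib_def x_def m_def Y_def using b_lemma by simp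
  define X2 where "X2 = (x - qq) mod p"
  have X2e: "X2 = x - qq + p*i3" unfolding X2_def i3_def using xr qq1 qq2 by (intro modc1) auto
  have X2r: "0 \<le> X2" "X2 < p" unfolding X2_def using pp by auto
  define i4 where "i4 = ind (X2 < rr)"
  have mrq: "mm (k - r - q) = m - 2 + i3 + ib + i4 + i2"
  proof -
    have "mm (k - r - q) = mm (k - r) - 1 + ind (xc (k - r) < rr) + ind (zc (k - r) < rho2)" by (rule mm_q)
    also have "xc (k - r) = X2" unfolding xc_r X2_def x_def ..
    also have "zc (k - r) = zc k" by (rule zc_r)
    finally show ?thesis unfolding mr i4_def i2_def Z_def using c_lemma by simp
  qed
  have m1: "(x - rr) mod p = x - rr + p*i1" unfolding i1_def using xr rr1 rr2 by (intro modc1) auto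
  have m2: "(x - qq) mod p = x - qq + p*i3" using X2e unfolding X2_def .
  have m3: "(Y + qq) mod p = Y + qq - p*(1 - ib)"
  proof -
    have "(Y + qq) mod p = Y + qq - p * ind (\<not> Y + qq < p)" using Yr qq1 qq2 by (intro modc2) auto
    thus ?thesis unfolding ib_def by (simp add: ind_def)
  qed
  have m4: "(x - qq - rr) mod p = x - qq + p*i3 - rr + p*i4"
  proof -
    have "(x - qq - rr) mod p = (X2 - rr) mod p" unfolding X2_def by (simp add: mod_diff_left_eq)
    also have "\<dots> = X2 - rr + p*i4" unfolding i4_def using X2r rr1 rr2 by (intro modc1) auto
    finally show ?thesis using X2e by simp
  qed
  have c1: "x + Y + E \<le> s \<longleftrightarrow> m \<le> 0"
  proof -
    have "x + Y + E \<le> s \<longleftrightarrow> p*m \<le> Z" using Ed by linarith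
    thus ?thesis using mul_le_small[OF pp Zr] by simp
  qed
  have c2: "(x - rr) mod p + Y + E \<le> s \<longleftrightarrow> mm (k - q) \<le> 0"
  proof -
    have "(x - rr) mod p + Y + E \<le> s \<longleftrightarrow> p*(m + i1) \<le> Z + rr"
      unfolding m1 using Ed by (simp add: distrib_left) linarith
    also have "\<dots> \<longleftrightarrow> (m + i1) + i2 - 1 \<le> 0" unfolding i2_def using mul_le_c[OF pp Zr] rr1 rr2 by simp
    finally show ?thesis unfolding mq by arith
  qed
  have c3: "(x - qq) mod p + (Y + qq) mod p + E \<le> s \<longleftrightarrow> mm (k - r) \<le> 0"
  proof -
    have "(x - qq) mod p + (Y + qq) mod p + E \<le> s \<longleftrightarrow> p*(m + i3 + ib - 1) \<le> Z"
      unfolding m2 m3 using Ed by (simp add: algebra_simps) linarith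
    also have "\<dots> \<longleftrightarrow> m + i3 + ib - 1 \<le> 0" using mul_le_small[OF pp Zr] by simp
    finally show ?thesis unfolding mr by arith
  qed
  have c4: "(x - qq - rr) mod p + (Y + qq) mod p + E \<le> s \<longleftrightarrow> mm (k - r - q) \<le> 0"
  proof -
    have "(x - qq - rr) mod p + (Y + qq) mod p + E \<le> s \<longleftrightarrow> p*(m + i3 + i4 + ib - 1) \<le> Z + rr"
      unfolding m4 m3 using Ed by (simp add: algebra_simps) linarith
    also have "\<dots> \<longleftrightarrow> (m + i3 + i4 + ib - 1) + i2 - 1 \<le> 0" unfolding i2_def using mul_le_c[OF pp Zr] rr1 rr2 by simp
    finally show ?thesis unfolding mrq by arith
  qed
  show ?thesis unfolding tfun_def Gz_mm using c1 c2 c3 c4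
    unfolding x_def[symmetric] Y_def[symmetric] E_def[symmetric] m_def[symmetric] by simp
qed

end

lemma sum_le_card:
  fixes f :: "nat \<Rightarrow> int" and X :: "nat \<Rightarrow> int"
  assumes bij: "bij_betw X {..<m} {0..<int m}" and le: "\<And>i. i < m \<Longrightarrow> f i \<le> ind (X i \<in> A)"
  shows "sum f {..<m} \<le> int (card (A \<inter> {0..<int m}))"
proof -
  have "sum f {..<m} \<le> (\<Sum>i<m. ind (X i \<in> A))" using le by (intro sum_mono) auto
  also have "(\<Sum>i<m. ind (X i \<in> A)) = (\<Sum>x\<in>{0..<int m}. ind (x \<in> A))"
    using sum.reindex_bij_betw[OF bij, of "\<lambda>x. ind (x \<in> A)"] by simp
  also have "\<dots> = (\<Sum>x\<in>{0..<int m} \<inter> A. 1)"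
    unfolding ind_def by (rule sum.inter_restrict[symmetric]) simp
  also have "\<dots> = int (card (A \<inter> {0..<int m}))" by (simp add: Int_commute)
  finally show ?thesis .
qed

lemma sum_ge_card:
  fixes f :: "nat \<Rightarrow> int" and X :: "nat \<Rightarrow> int"
  assumes bij: "bij_betw X {..<m} {0..<int m}" and le: "\<And>i. i < m \<Longrightarrow> f i \<ge> - ind (X i \<in> A)"
  shows "sum f {..<m} \<ge> - int (card (A \<inter> {0..<int m}))"
proof -
  have "sum (\<lambda>i. - f i) {..<m} \<le> int (card (A \<inter> {0..<int m}))"
    using le by (intro sum_le_card[OF bij]) force
  thus ?thesis by (simp add: sum_negf)
qed

lemma bij_mod:
  assumes "0 < P" "coprime c P"
  shows "bij_betw (\<lambda>i. (c0 - int i * c) mod P) {..<nat P} {0..<P}"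
proof -
  let ?f = "\<lambda>i. (c0 - int i * c) mod P"
  have inj: "inj_on ?f {..<nat P}"
  proof (rule inj_onI)
    fix i j assume ij: "i \<in> {..<nat P}" "j \<in> {..<nat P}" "?f i = ?f j"
    hence "P dvd ((c0 - int i * c) - (c0 - int j * c))" by (simp add: mod_eq_dvd_iff)
    hence "P dvd ((int j - int i) * c)" by (simp add: algebra_simps)
    hence d: "P dvd (int j - int i)" using assms by (simp add: coprime_commute coprime_dvd_mult_left_iff)
    show "i = j"
    proof (rule ccontr)
      assume "i \<noteq> j"
      hence "int j - int i \<noteq> 0" by simp
      hence "\<bar>P\<bar> \<le> \<bar>int j - int i\<bar>" using d by (rule dvd_imp_le_int)
      thus False using ij assms by auto
    qed
  qed
  have sub: "?f ` {..<nat P} \<subseteq> {0..<P}" using assms by auto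
  have "card (?f ` {..<nat P}) = card {0..<P}" using card_image[OF inj] assms by simp
  hence "?f ` {..<nat P} = {0..<P}" using sub by (intro card_subset_eq) auto
  thus ?thesis using inj unfolding bij_betw_def by simp
qed

lemma cardP:
  fixes a b s P :: int
  assumes "1 \<le> a" "a \<le> b" "a + b \<le> P" "0 \<le> s" "s < P"
  shows "int (card ({x. x < a \<or> (a + b \<le> x \<and> s + 1 \<le> x \<and> x \<le> a + b + s)} \<inter> {0..<P})) \<le> min (2*a + b) (P - b)"
proof -
  let ?lo = "max (a + b) (s + 1)" and ?hi = "min (P - 1) (a + b + s)"
  have "{x. x < a \<or> (a + b \<le> x \<and> s + 1 \<le> x \<and> x \<le> a + b + s)} \<inter> {0..<P} \<subseteq> {0..<a} \<union> {?lo..?hi}"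
    by auto
  hence "card ({x. x < a \<or> (a + b \<le> x \<and> s + 1 \<le> x \<and> x \<le> a + b + s)} \<inter> {0..<P}) \<le> card ({0..<a} \<union> {?lo..?hi})"
    by (intro card_mono) auto
  also have "\<dots> \<le> card {0..<a} + card {?lo..?hi}" by (rule card_Un_le)
  finally have "card ({x. x < a \<or> (a + b \<le> x \<and> s + 1 \<le> x \<and> x \<le> a + b + s)} \<inter> {0..<P}) \<le> nat a + nat (?hi - ?lo + 1)"
    by simp
  hence "int (card ({x. x < a \<or> (a + b \<le> x \<and> s + 1 \<le> x \<and> x \<le> a + b + s)} \<inter> {0..<P})) \<le> int (nat a + nat (?hi - ?lo + 1))"
    by (simp only: of_nat_le_iff)
  also have "\<dots> \<le> min (2*a + b) (P - b)" using assms by (simp add: min_def max_def; arith)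
  finally show ?thesis .
qed

lemma cardN:
  fixes a b s P :: int
  assumes "1 \<le> a" "a \<le> b" "a + b \<le> P" "0 \<le> s" "s < P"
  shows "int (card ({x. a \<le> x \<and> x < a + b \<and> s + b + 1 \<le> x + P \<and> (x \<le> a + s \<or> (b \<le> x \<and> x \<le> b + s))} \<inter> {0..<P})) \<le> min (P + 2*a - b) b"
proof -
  let ?S = "{x. a \<le> x \<and> x < a + b \<and> s + b + 1 \<le> x + P \<and> (x \<le> a + s \<or> (b \<le> x \<and> x \<le> b + s))} \<inter> {0..<P}"
  have "?S \<subseteq> {a..<a+b}" by auto
  hence c1: "card ?S \<le> nat b" using card_mono[of "{a..<a+b}" ?S] by simp
  let ?lo = "max a (s + b + 1 - P)"
  have "?S \<subseteq> {?lo..a+s} \<union> {b..<a+b}" by auto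
  hence "card ?S \<le> card ({?lo..a+s} \<union> {b..<a+b})" by (intro card_mono) auto
  also have "\<dots> \<le> card {?lo..a+s} + card {b..<a+b}" by (rule card_Un_le)
  finally have "card ?S \<le> nat (a + s - ?lo + 1) + nat a" by simp
  hence c2: "int (card ?S) \<le> int (nat (a + s - ?lo + 1) + nat a)" by (simp only: of_nat_le_iff)
  have "int (nat (a + s - ?lo + 1) + nat a) \<le> P + 2*a - b" using assms by (simp add: max_def; arith)
  thus ?thesis using c1 c2 assms by simp
qed

lemma coprime_of_inv: "(c * a) mod (p::int) = 1 \<Longrightarrow> 1 < p \<Longrightarrow> coprime a p"
proof -
  assume h: "(c * a) mod p = 1" "1 < p"
  have "[a * c = 1] (mod p)" using h by (simp add: cong_def mult.commute)
  thus ?thesis using coprime_iff_invertible_int by blast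
qed

context tern begin

definition "tG k = Gz k - Gz (k - q) - Gz (k - r) + Gz (k - r - q)"

lemma cop_x: "coprime (qq*rr) p"
  using coprime_of_inv[OF qqinv] coprime_of_inv[OF rrinv] p2 by simp

lemma s_rng: "0 \<le> n \<Longrightarrow> n < N \<Longrightarrow> 0 \<le> n div (q*r) \<and> n div (q*r) < p"
proof -
  assume h: "0 \<le> n" "n < N"
  have "n < p * (q*r)" using h by (simp add: N_def algebra_simps)
  thus ?thesis using h pos div_lt_iff[of "q*r" n p] by (simp add: pos_imp_zdiv_nonneg_iff)
qed

lemma window_A:
  assumes "qq \<le> rr" "qq + rr \<le> p" "0 \<le> n" "n < N"
  shows "(\<Sum>i<nat p. tG (n - int i)) \<le> min (2*qq + rr) (p - rr)"
    and "(\<Sum>i<nat p. tG (n - int i)) \<ge> - min (p + 2*qq - rr) rr"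
proof -
  define s where "s = n div (q*r)"
  have sr: "0 \<le> s" "s < p" using s_rng[OF assms(3,4)] unfolding s_def by auto
  define X where "X i = ((n*qq*rr) - int i * (qq*rr)) mod p" for i :: nat
  have Xe: "X i = xc (n - int i)" for i unfolding X_def xc_def by (simp add: algebra_simps)
  have bij: "bij_betw X {..<nat p} {0..<int (nat p)}"
    unfolding X_def using bij_mod[of p "qq*rr" "n*qq*rr"] pos cop_x by simp
  have te: "tG (n - int i) = tfun p qq rr s (xc (n - int i)) (Yh (n - int i)) (ee s (n - int i))" if "i < nat p" for i
    unfolding tG_def using that assms by (intro tG_eq[symmetric]) (auto simp: s_def)
  have er: "0 \<le> ee s (n - int i)" "ee s (n - int i) \<le> 1" if "i < nat p" for i
    using ee_rng[of n "n - int i" s] that assms by (auto simp: s_def)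
  have "(\<Sum>i<nat p. tG (n - int i)) \<le> int (card ({x. x < qq \<or> (qq + rr \<le> x \<and> s + 1 \<le> x \<and> x \<le> qq + rr + s)} \<inter> {0..<int (nat p)}))"
  proof (rule sum_le_card[OF bij])
    fix i assume i: "i < nat p"
    show "tG (n - int i) \<le> ind (X i \<in> {x. x < qq \<or> (qq + rr \<le> x \<and> s + 1 \<le> x \<and> x \<le> qq + rr + s)})"
      unfolding te[OF i] Xe using coreA_up[of qq rr p "xc (n - int i)" "Yh (n - int i)" "ee s (n - int i)" s]
        qq1 assms xc_rng Yh_rng er[OF i] sr by (simp add: ind_def)
  qed
  also have "\<dots> \<le> min (2*qq + rr) (p - rr)" using cardP[of qq rr p s] qq1 assms sr pos by simp
  finally show "(\<Sum>i<nat p. tG (n - int i)) \<le> min (2*qq + rr) (p - rr)" .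
  have "(\<Sum>i<nat p. tG (n - int i)) \<ge> - int (card ({x. qq \<le> x \<and> x < qq + rr \<and> s + rr + 1 \<le> x + p \<and> (x \<le> qq + s \<or> (rr \<le> x \<and> x \<le> rr + s))} \<inter> {0..<int (nat p)}))"
  proof (rule sum_ge_card[OF bij])
    fix i assume i: "i < nat p"
    show "tG (n - int i) \<ge> - ind (X i \<in> {x. qq \<le> x \<and> x < qq + rr \<and> s + rr + 1 \<le> x + p \<and> (x \<le> qq + s \<or> (rr \<le> x \<and> x \<le> rr + s))})"
      unfolding te[OF i] Xe using coreA_low[of qq rr p "xc (n - int i)" "Yh (n - int i)" "ee s (n - int i)" s]
        qq1 assms xc_rng Yh_rng er[OF i] sr by (simp add: ind_def)
  qed
  moreover have "int (card ({x. qq \<le> x \<and> x < qq + rr \<and> s + rr + 1 \<le> x + p \<and> (x \<le> qq + s \<or> (rr \<le> x \<and> x \<le> rr + s))} \<inter> {0..<int (nat p)})) \<le> min (p + 2*qq - rr) rr"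
    using cardN[of qq rr p s] qq1 assms sr pos by simp
  ultimately show "(\<Sum>i<nat p. tG (n - int i)) \<ge> - min (p + 2*qq - rr) rr" by linarith
qed

lemma window_B:
  assumes "rr \<le> qq" "p \<le> qq + rr" "0 \<le> n" "n < N"
  shows "(\<Sum>i<nat p. tG (n - int i)) \<le> min (2*(p - qq) + (p - rr)) (p - (p - rr))"
    and "(\<Sum>i<nat p. tG (n - int i)) \<ge> - min (p + 2*(p - qq) - (p - rr)) (p - rr)"
proof -
  define s where "s = n div (q*r)"
  define a where "a = p - qq"
  define b where "b = p - rr"
  have ab: "1 \<le> a" "a \<le> b" "a + b \<le> p" using assms qq2 unfolding a_def b_def by auto
  have sr: "0 \<le> s" "s < p" using s_rng[OF assms(3,4)] unfolding s_def by auto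
  define X where "X i = ((n*qq*rr - qq - rr) - int i * (qq*rr)) mod p" for i :: nat
  have Xe: "X i = (xc (n - int i) - qq - rr) mod p" for i
  proof -
    have "(xc (n - int i) - qq - rr) mod p = ((n - int i)*qq*rr - qq - rr) mod p"
      unfolding xc_def using mod_diff_left_eq[of "(n - int i) * qq * rr" p "qq + rr"] by (simp add: algebra_simps)
    thus ?thesis unfolding X_def by (simp add: algebra_simps)
  qed
  have bij: "bij_betw X {..<nat p} {0..<int (nat p)}"
    unfolding X_def using bij_mod[of p "qq*rr" "n*qq*rr - qq - rr"] pos cop_x by simp
  have te: "tG (n - int i) = tfun p a b s ((xc (n - int i) - qq - rr) mod p) ((Yh (n - int i) + qq) mod p) (ee s (n - int i))" if "i < nat p" for i
  proof -
    have "tG (n - int i) = tfun p qq rr s (xc (n - int i)) (Yh (n - int i)) (ee s (n - int i))"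
      unfolding tG_def using that assms by (intro tG_eq[symmetric]) (auto simp: s_def)
    also have "\<dots> = tfun p a b s ((xc (n - int i) - qq - rr) mod p) ((Yh (n - int i) + qq) mod p) (ee s (n - int i))"
      unfolding a_def b_def using pos xc_rng Yh_rng by (intro tfun_sym) auto
    finally show ?thesis .
  qed
  have er: "0 \<le> ee s (n - int i)" "ee s (n - int i) \<le> 1" if "i < nat p" for i
    using ee_rng[of n "n - int i" s] that assms by (auto simp: s_def)
  have xr: "0 \<le> (xc k - qq - rr) mod p" "(xc k - qq - rr) mod p < p" for k using pos by auto
  have yr: "0 \<le> (Yh k + qq) mod p" "(Yh k + qq) mod p < p" for k using pos by auto
  have "(\<Sum>i<nat p. tG (n - int i)) \<le> int (card ({x. x < a \<or> (a + b \<le> x \<and> s + 1 \<le> x \<and> x \<le> a + b + s)} \<inter> {0..<int (nat p)}))"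
  proof (rule sum_le_card[OF bij])
    fix i assume i: "i < nat p"
    show "tG (n - int i) \<le> ind (X i \<in> {x. x < a \<or> (a + b \<le> x \<and> s + 1 \<le> x \<and> x \<le> a + b + s)})"
      unfolding te[OF i] Xe using coreA_up[of a b p "(xc (n - int i) - qq - rr) mod p" "(Yh (n - int i) + qq) mod p" "ee s (n - int i)" s]
        ab xr yr er[OF i] sr by (simp add: ind_def)
  qed
  also have "\<dots> \<le> min (2*a + b) (p - b)" using cardP[of a b p s] ab sr pos by simp
  finally show "(\<Sum>i<nat p. tG (n - int i)) \<le> min (2*(p - qq) + (p - rr)) (p - (p - rr))" unfolding a_def b_def .
  have "(\<Sum>i<nat p. tG (n - int i)) \<ge> - int (card ({x. a \<le> x \<and> x < a + b \<and> s + b + 1 \<le> x + p \<and> (x \<le> a + s \<or> (b \<le> x \<and> x \<le> b + s))} \<inter> {0..<int (nat p)}))"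
  proof (rule sum_ge_card[OF bij])
    fix i assume i: "i < nat p"
    show "tG (n - int i) \<ge> - ind (X i \<in> {x. a \<le> x \<and> x < a + b \<and> s + b + 1 \<le> x + p \<and> (x \<le> a + s \<or> (b \<le> x \<and> x \<le> b + s))})"
      unfolding te[OF i] Xe using coreA_low[of a b p "(xc (n - int i) - qq - rr) mod p" "(Yh (n - int i) + qq) mod p" "ee s (n - int i)" s]
        ab xr yr er[OF i] sr by (simp add: ind_def)
  qed
  moreover have "int (card ({x. a \<le> x \<and> x < a + b \<and> s + b + 1 \<le> x + p \<and> (x \<le> a + s \<or> (b \<le> x \<and> x \<le> b + s))} \<inter> {0..<int (nat p)})) \<le> min (p + 2*a - b) b"
    using cardN[of a b p s] ab sr pos by simp
  ultimately show "(\<Sum>i<nat p. tG (n - int i)) \<ge> - min (p + 2*(p - qq) - (p - rr)) (p - rr)" unfolding a_def b_def by linarith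
qed

end

context tern begin

lemma Gz_neg: "k < 0 \<Longrightarrow> Gz k = 0"
proof -
  assume "k < 0"
  moreover have "0 \<le> Rv k" unfolding Rv_def using xc_rng yc_rng zc_rng pos by simp
  ultimately show ?thesis unfolding Gz_def by simp
qed

lemma xc_pq: "xc (k - p*q) = xc k"
proof -
  have "(k - p*q)*qq*rr = k*qq*rr - p*(q*qq*rr)" by (simp add: algebra_simps)
  hence "xc (k - p*q) = (k*qq*rr - (p*(q*qq*rr)) mod p) mod p" unfolding xc_def by (metis mod_diff_right_eq)
  thus ?thesis unfolding xc_def by simp
qed
lemma yc_pq: "yc (k - p*q) = yc k"
proof -
  have "(k - p*q)*iy = k*iy - q*(p*iy)" by (simp add: algebra_simps)
  hence "yc (k - p*q) = (k*iy - (q*(p*iy)) mod q) mod q" unfolding yc_def by (metis mod_diff_right_eq)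
  thus ?thesis unfolding yc_def by simp
qed
lemma zc_pq: "zc (k - p*q) = (zc k - 1) mod r"
proof -
  have "(k - p*q)*iz = k*iz - p*q*iz" by (simp add: algebra_simps)
  hence "zc (k - p*q) = (k*iz - (p*q*iz) mod r) mod r" unfolding zc_def by (metis mod_diff_right_eq)
  thus ?thesis unfolding zc_def using izinv by (simp add: mod_diff_left_eq)
qed
lemma xc_pr: "xc (k - p*r) = xc k"
proof -
  have "(k - p*r)*qq*rr = k*qq*rr - p*(r*qq*rr)" by (simp add: algebra_simps)
  hence "xc (k - p*r) = (k*qq*rr - (p*(r*qq*rr)) mod p) mod p" unfolding xc_def by (metis mod_diff_right_eq)
  thus ?thesis unfolding xc_def by simp
qed
lemma zc_pr: "zc (k - p*r) = zc k"
proof -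
  have "(k - p*r)*iz = k*iz - r*(p*iz)" by (simp add: algebra_simps)
  hence "zc (k - p*r) = (k*iz - (r*(p*iz)) mod r) mod r" unfolding zc_def by (metis mod_diff_right_eq)
  thus ?thesis unfolding zc_def by simp
qed
lemma yc_pr: "yc (k - p*r) = (yc k - 1) mod q"
proof -
  have "(k - p*r)*iy = k*iy - p*r*iy" by (simp add: algebra_simps)
  hence "yc (k - p*r) = (k*iy - (p*r*iy) mod q) mod q" unfolding yc_def by (metis mod_diff_right_eq)
  thus ?thesis unfolding yc_def using iyinv by (simp add: mod_diff_left_eq)
qed
lemma yc_qr: "yc (k - q*r) = yc k"
proof -
  have "(k - q*r)*iy = k*iy - q*(r*iy)" by (simp add: algebra_simps)
  hence "yc (k - q*r) = (k*iy - (q*(r*iy)) mod q) mod q" unfolding yc_def by (metis mod_diff_right_eq)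
  thus ?thesis unfolding yc_def by simp
qed
lemma zc_qr: "zc (k - q*r) = zc k"
proof -
  have "(k - q*r)*iz = k*iz - r*(q*iz)" by (simp add: algebra_simps)
  hence "zc (k - q*r) = (k*iz - (r*(q*iz)) mod r) mod r" unfolding zc_def by (metis mod_diff_right_eq)
  thus ?thesis unfolding zc_def by simp
qed
lemma xc_qr: "xc (k - q*r) = (xc k - 1) mod p"
proof -
  have "(k - q*r)*qq*rr = k*qq*rr - (q*qq)*(r*rr)" by (simp add: algebra_simps)
  hence "xc (k - q*r) = (k*qq*rr - ((q*qq) mod p * ((r*rr) mod p)) mod p) mod p" unfolding xc_def
    by (metis mod_diff_right_eq mod_mult_eq)
  thus ?thesis unfolding xc_def using qqinv rrinv p2 by (simp add: mod_diff_left_eq)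
qed

lemma mm_pq: "mm (k - p*q) = mm k + ind (zc k = 0)"
proof -
  have z: "zc (k - p*q) = zc k - 1 + r * ind (zc k = 0)"
  proof -
    have "zc (k - p*q) = zc k - 1 + r * ind (zc k < 1)" unfolding zc_pq using zc_rng pos by (intro modc1) auto
    moreover have "ind (zc k < 1) = ind (zc k = 0)" using zc_rng[of k] unfolding ind_def by auto
    ultimately show ?thesis by simp
  qed
  have "Rv (k - p*q) = Rv k - p*q + N * ind (zc k = 0)" unfolding Rv_def z xc_pq yc_pq by (simp add: N_def algebra_simps)
  hence "N * mm (k - p*q) = N * (mm k + ind (zc k = 0))" using Rv_eq[of k] Rv_eq[of "k - p*q"] by (simp add: algebra_simps)
  thus ?thesis using pos by simp
qed

lemma mm_pr: "mm (k - p*r) = mm k + ind (yc k = 0)"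
proof -
  have y: "yc (k - p*r) = yc k - 1 + q * ind (yc k = 0)"
  proof -
    have "yc (k - p*r) = yc k - 1 + q * ind (yc k < 1)" unfolding yc_pr using yc_rng pos by (intro modc1) auto
    moreover have "ind (yc k < 1) = ind (yc k = 0)" using yc_rng[of k] unfolding ind_def by auto
    ultimately show ?thesis by simp
  qed
  have "Rv (k - p*r) = Rv k - p*r + N * ind (yc k = 0)" unfolding Rv_def y xc_pr zc_pr by (simp add: N_def algebra_simps)
  hence "N * mm (k - p*r) = N * (mm k + ind (yc k = 0))" using Rv_eq[of k] Rv_eq[of "k - p*r"] by (simp add: algebra_simps)
  thus ?thesis using pos by simp
qed

lemma mm_qr: "mm (k - q*r) = mm k + ind (xc k = 0)"
proof -
  have x: "xc (k - q*r) = xc k - 1 + p * ind (xc k = 0)"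
  proof -
    have "xc (k - q*r) = xc k - 1 + p * ind (xc k < 1)" unfolding xc_qr using xc_rng pos p2 by (intro modc1) auto
    moreover have "ind (xc k < 1) = ind (xc k = 0)" using xc_rng[of k] unfolding ind_def by auto
    ultimately show ?thesis by simp
  qed
  have "Rv (k - q*r) = Rv k - q*r + N * ind (xc k = 0)" unfolding Rv_def x yc_qr zc_qr by (simp add: N_def algebra_simps)
  hence "N * mm (k - q*r) = N * (mm k + ind (xc k = 0))" using Rv_eq[of k] Rv_eq[of "k - q*r"] by (simp add: algebra_simps)
  thus ?thesis using pos by simp
qed

lemma GI:
  assumes "0 \<le> M" "M < N"
  shows "Gz M - Gz (M - q*r) - Gz (M - p*r) + Gz (M - q*r - p*r)
     - (Gz (M - p*q) - Gz (M - p*q - q*r) - Gz (M - p*q - p*r) + Gz (M - p*q - q*r - p*r))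
     = (if M = 0 then 1 else 0)"
proof -
  define A where "A = ind (xc M = 0)"
  define B where "B = ind (yc M = 0)"
  define Cz where "Cz = ind (zc M = 0)"
  define m where "m = mm M"
  have m0: "m \<ge> 0"
  proof -
    have "0 \<le> Rv M" unfolding Rv_def using xc_rng yc_rng zc_rng pos by simp
    hence "N * (-1) < N * m" using Rv_eq[of M] assms unfolding m_def by simp
    moreover have "0 \<le> N" using pos by simp
    ultimately have "-1 < m" by (rule mult_left_less_imp_less)
    thus ?thesis by simp
  qed
  have g1: "mm (M - q*r) = m + A" unfolding mm_qr m_def A_def ..
  have g2: "mm (M - p*r) = m + B" unfolding mm_pr m_def B_def ..
  have g3: "mm (M - q*r - p*r) = m + A + B" unfolding mm_pr mm_qr yc_qr m_def A_def B_def ..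
  have g4: "mm (M - p*q) = m + Cz" unfolding mm_pq m_def Cz_def ..
  have g5: "mm (M - p*q - q*r) = m + Cz + A" unfolding mm_qr mm_pq xc_pq m_def A_def Cz_def ..
  have g6: "mm (M - p*q - p*r) = m + Cz + B" unfolding mm_pr mm_pq yc_pq m_def B_def Cz_def ..
  have g7: "mm (M - p*q - q*r - p*r) = m + Cz + A + B" unfolding mm_pr mm_qr mm_pq yc_qr yc_pq xc_pq m_def A_def B_def Cz_def ..
  have zero: "M = 0 \<longleftrightarrow> m = 0 \<and> A = 1 \<and> B = 1 \<and> Cz = 1"
  proof
    assume "M = 0"
    hence "xc M = 0" "yc M = 0" "zc M = 0" unfolding xc_def yc_def zc_def by auto
    moreover hence "Rv M = 0" unfolding Rv_def by simp
    hence "m = 0" using Rv_eq[of M] \<open>M = 0\<close> pos unfolding m_def by simp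
    ultimately show "m = 0 \<and> A = 1 \<and> B = 1 \<and> Cz = 1" unfolding A_def B_def Cz_def ind_def by simp
  next
    assume h: "m = 0 \<and> A = 1 \<and> B = 1 \<and> Cz = 1"
    hence "xc M = 0" "yc M = 0" "zc M = 0" unfolding A_def B_def Cz_def ind_def by (auto split: if_splits)
    hence "Rv M = 0" unfolding Rv_def by simp
    thus "M = 0" using Rv_eq[of M] h unfolding m_def by simp
  qed
  have bits: "A \<in> {0,1}" "B \<in> {0,1}" "Cz \<in> {0,1}" unfolding A_def B_def Cz_def ind_def by auto
  show ?thesis unfolding Gz_mm g1 g2 g3 g4 g5 g6 g7 m_def[symmetric] zero using m0 bits by auto
qed

end

lemma deg_xn1: "0 < n \<Longrightarrow> degree (monom (1::complex) n - 1) = n"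
proof -
  assume n: "0 < n"
  have "monom (1::complex) n - 1 = monom 1 n + (-1)" by simp
  also have "degree \<dots> = n" using n by (subst degree_add_eq_left) (auto simp: degree_monom_eq)
  finally show ?thesis .
qed

lemma xn1_prod:
  assumes n: "0 < n"
  shows "monom (1::complex) n - 1 = (\<Prod>j<n. [: - ((cis (2*pi/real n))^j), 1:])"
proof -
  let ?P = "monom (1::complex) n - 1"
  have lc: "lead_coeff ?P = 1" using deg_xn1[OF n] n by simp
  have roots: "{z. poly ?P z = 0} = {z. z^n = 1}" by (simp add: poly_monom)
  have sqf: "rsquarefree ?P"
    unfolding rsquarefree_roots
  proof (intro allI notI)
    fix z assume h: "poly ?P z = 0 \<and> poly (pderiv ?P) z = 0"
    hence zn: "z^n = 1" by (simp add: poly_monom)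
    hence "z \<noteq> 0" using n by (auto simp: power_0_left)
    moreover have "poly (pderiv ?P) z = of_nat n * z^(n-1)" by (simp add: pderiv_diff pderiv_monom poly_monom)
    ultimately show False using h n by simp
  qed
  have "?P = smult (lead_coeff ?P) (\<Prod>z|poly ?P z = 0. [:-z, 1:])"
    using complex_poly_decompose_rsquarefree[OF sqf] by simp
  also have "\<dots> = (\<Prod>z\<in>{z. z^n = 1}. [:-z, 1:])" using lc roots by simp
  also have "\<dots> = (\<Prod>k<n. [: - (cis (2 * pi * real k / real n)), 1:])"
    using prod.reindex_bij_betw[OF bij_betw_roots_unity[OF n], of "\<lambda>z. [:-z,1:]"] by simp
  also have "\<dots> = (\<Prod>j<n. [: - ((cis (2*pi/real n))^j), 1:])"
    by (intro prod.cong refl) (simp add: DeMoivre mult_ac)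
  finally show ?thesis .
qed

lemma prod_multiples:
  fixes d N n :: nat
  assumes "0 < d" "N = n * d"
  shows "(\<Prod>j<n. f (j*d)) = (\<Prod>k<N. f k ^ (if d dvd k then 1 else 0))"
proof -
  have img: "(\<lambda>j. j*d) ` {..<n} = {k\<in>{..<N}. d dvd k}"
  proof
    show "(\<lambda>j. j*d) ` {..<n} \<subseteq> {k\<in>{..<N}. d dvd k}" using assms by (auto simp: mult_less_cancel2)
    show "{k\<in>{..<N}. d dvd k} \<subseteq> (\<lambda>j. j*d) ` {..<n}"
    proof
      fix k assume k: "k \<in> {k\<in>{..<N}. d dvd k}"
      then obtain j where j: "k = d*j" by auto
      have "j < n" using k j assms by (simp add: mult.commute)
      thus "k \<in> (\<lambda>j. j*d) ` {..<n}" using j by (auto simp: mult.commute)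
    qed
  qed
  have inj: "inj_on (\<lambda>j. j*d) {..<n}" using assms by (auto simp: inj_on_def)
  have "(\<Prod>j<n. f (j*d)) = (\<Prod>k\<in>{k\<in>{..<N}. d dvd k}. f k)"
    using prod.reindex[OF inj, of f] img by simp
  also have "\<dots> = (\<Prod>k<N. if d dvd k then f k else 1)" by (rule prod.inter_filter) simp
  also have "\<dots> = (\<Prod>k<N. f k ^ (if d dvd k then 1 else 0))" by (intro prod.cong) auto
  finally show ?thesis .
qed

definition L :: "nat \<Rightarrow> nat \<Rightarrow> complex poly" where
  "L N k = [: - ((cis (2*pi/real N))^k), 1:]"

lemma xn1_L:
  fixes d N n :: nat
  assumes "0 < d" "N = n * d" "0 < n"
  shows "monom (1::complex) n - 1 = (\<Prod>k<N. L N k ^ (if d dvd k then 1 else 0))"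
proof -
  have "monom (1::complex) n - 1 = (\<Prod>j<n. [: - ((cis (2*pi/real n))^j), 1:])" by (rule xn1_prod) fact
  also have "\<dots> = (\<Prod>j<n. L N (j*d))"
  proof (intro prod.cong refl)
    fix j
    have "(cis (2*pi/real n))^j = cis (real j * (2*pi/real n))" by (simp add: DeMoivre)
    also have "real j * (2*pi/real n) = real (j*d) * (2*pi/real N)"
      using assms by (simp add: field_simps)
    also have "cis \<dots> = (cis (2*pi/real N))^(j*d)" by (simp add: DeMoivre)
    finally show "[: - ((cis (2*pi/real n))^j), 1:] = L N (j*d)" unfolding L_def by simp
  qed
  also have "\<dots> = (\<Prod>k<N. L N k ^ (if d dvd k then 1 else 0))" by (rule prod_multiples) fact+
  finally show ?thesis .
qed

lemma cyclo_L: "cyclo_poly N = (\<Prod>k<N. L N k ^ (if 0 < k \<and> coprime k N then 1 else 0))"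
proof -
  have "cyclo_poly N = (\<Prod>k\<in>{k\<in>{..<N}. 0 < k \<and> coprime k N}. L N k)"
    unfolding cyclo_poly_def L_def by (intro prod.cong) auto
  also have "\<dots> = (\<Prod>k<N. if 0 < k \<and> coprime k N then L N k else 1)" by (rule prod.inter_filter) simp
  also have "\<dots> = (\<Prod>k<N. L N k ^ (if 0 < k \<and> coprime k N then 1 else 0))" by (intro prod.cong) auto
  finally show ?thesis .
qed

lemma prime_coprime_iff: "prime (p::nat) \<Longrightarrow> coprime k p \<longleftrightarrow> \<not> p dvd k"
proof
  assume h: "prime p" "coprime k p"
  show "\<not> p dvd k"
  proof
    assume "p dvd k"
    hence "is_unit p" using h coprime_common_divisor[of k p p] by auto
    thus False using h by simp
  qed
next
  assume "prime p" "\<not> p dvd k"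
  thus "coprime k p" using prime_imp_coprime[of p k] by (simp add: coprime_commute)
qed

lemma exps:
  fixes p q r k :: nat
  assumes pr: "prime p" "prime q" "prime r" and d: "p \<noteq> q" "q \<noteq> r" "p \<noteq> r" and k: "k < p*q*r"
  shows "(if 0 < k \<and> coprime k (p*q*r) then 1 else 0) + (if r dvd k then 1 else 0) + (if q dvd k then 1 else 0)
        + (if p dvd k then 1 else 0) + (if p*q*r dvd k then 1 else 0)
       = (if 1 dvd k then 1 else 0) + (if q*r dvd k then 1 else 0) + (if p*r dvd k then 1 else (0::nat))
        + (if p*q dvd k then 1 else 0)"
proof -
  have cpq: "coprime p q" "coprime q r" "coprime p r" using pr d by (auto intro: primes_coprime)
  have cop: "coprime k (p*q*r) \<longleftrightarrow> \<not> p dvd k \<and> \<not> q dvd k \<and> \<not> r dvd k"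
    using pr by (simp add: prime_coprime_iff)
  have qr: "q*r dvd k \<longleftrightarrow> q dvd k \<and> r dvd k" using cpq divides_mult[of q k r] by (auto intro: dvd_mult_left dvd_mult_right)
  have pr': "p*r dvd k \<longleftrightarrow> p dvd k \<and> r dvd k" using cpq divides_mult[of p k r] by (auto intro: dvd_mult_left dvd_mult_right)
  have pq': "p*q dvd k \<longleftrightarrow> p dvd k \<and> q dvd k" using cpq divides_mult[of p k q] by (auto intro: dvd_mult_left dvd_mult_right)
  have cpqr: "coprime (p*q) r" using cpq by simp
  have N: "p*q*r dvd k \<longleftrightarrow> p dvd k \<and> q dvd k \<and> r dvd k"
    using pq' cpqr divides_mult[of "p*q" k r] by (auto intro: dvd_mult_left dvd_mult_right)
  have z: "p dvd k \<and> q dvd k \<and> r dvd k \<Longrightarrow> k = 0"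
  proof -
    assume "p dvd k \<and> q dvd k \<and> r dvd k"
    hence "p*q*r dvd k" using N by simp
    thus "k = 0" using k by (metis dvd_imp_le leD neq0_conv)
  qed
  have k0: "k = 0 \<Longrightarrow> p dvd k" by simp
  show ?thesis using cop qr pr' pq' N z k0 by (cases "p dvd k"; cases "q dvd k"; cases "r dvd k"; cases "k = 0") auto
qed

lemma prod_pow_mult: "(\<Prod>k\<in>A. f k ^ a k) * (\<Prod>k\<in>A. f k ^ b k) = (\<Prod>k\<in>A. f k ^ (a k + b k))"
  by (simp add: prod.distrib power_add)

lemma cyclo_identity:
  fixes p q r :: nat
  assumes pr: "prime p" "prime q" "prime r" and d: "p \<noteq> q" "q \<noteq> r" "p \<noteq> r"
  shows "cyclo_poly (p*q*r) * ((monom 1 (p*q) - 1) * (monom 1 (p*r) - 1) * (monom 1 (q*r) - 1) * (monom 1 1 - 1))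
       = (monom 1 (p*q*r) - 1) * (monom 1 p - 1) * (monom 1 q - 1) * (monom 1 r - 1)"
proof -
  define N where "N = p*q*r"
  have pos: "0 < p" "0 < q" "0 < r" using pr by (auto simp: prime_gt_0_nat)
  have e1: "monom (1::complex) (p*q) - 1 = (\<Prod>k<N. L N k ^ (if r dvd k then 1 else 0))"
    using pos by (intro xn1_L) (auto simp: N_def)
  have e2: "monom (1::complex) (p*r) - 1 = (\<Prod>k<N. L N k ^ (if q dvd k then 1 else 0))"
    using pos by (intro xn1_L) (auto simp: N_def)
  have e3: "monom (1::complex) (q*r) - 1 = (\<Prod>k<N. L N k ^ (if p dvd k then 1 else 0))"
    using pos by (intro xn1_L) (auto simp: N_def)
  have e4: "monom (1::complex) 1 - 1 = (\<Prod>k<N. L N k ^ (if N dvd k then 1 else 0))"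
    using pos by (intro xn1_L) (auto simp: N_def)
  have f1: "monom (1::complex) N - 1 = (\<Prod>k<N. L N k ^ (if 1 dvd k then 1 else 0))"
    using pos by (intro xn1_L) (auto simp: N_def)
  have f2: "monom (1::complex) p - 1 = (\<Prod>k<N. L N k ^ (if q*r dvd k then 1 else 0))"
    using pos by (intro xn1_L) (auto simp: N_def)
  have f3: "monom (1::complex) q - 1 = (\<Prod>k<N. L N k ^ (if p*r dvd k then 1 else 0))"
    using pos by (intro xn1_L) (auto simp: N_def)
  have f4: "monom (1::complex) r - 1 = (\<Prod>k<N. L N k ^ (if p*q dvd k then 1 else 0))"
    using pos by (intro xn1_L) (auto simp: N_def)
  have "cyclo_poly N * ((monom 1 (p*q) - 1) * (monom 1 (p*r) - 1) * (monom 1 (q*r) - 1) * (monom 1 1 - 1))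
      = (\<Prod>k<N. L N k ^ ((if 0 < k \<and> coprime k N then 1 else 0) + (if r dvd k then 1 else 0) + (if q dvd k then 1 else 0)
        + (if p dvd k then 1 else 0) + (if N dvd k then 1 else 0)))"
    unfolding cyclo_L e1 e2 e3 e4 by (simp only: prod_pow_mult mult.assoc add.assoc)
  also have "\<dots> = (\<Prod>k<N. L N k ^ ((if 1 dvd k then 1 else 0) + (if q*r dvd k then 1 else 0) + (if p*r dvd k then 1 else (0::nat))
        + (if p*q dvd k then 1 else 0)))"
    unfolding N_def using exps[OF pr d] by (intro prod.cong refl) auto
  also have "\<dots> = (monom 1 N - 1) * (monom 1 p - 1) * (monom 1 q - 1) * (monom 1 r - 1)"
    unfolding f1 f2 f3 f4 by (simp only: prod_pow_mult mult.assoc add.assoc)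
  finally show ?thesis unfolding N_def .
qed

lemma coeff_one_minus_monom:
  "coeff ((1 - monom (1::complex) a) * P) j = coeff P j - (if a \<le> j then coeff P (j - a) else 0)"
  by (simp add: left_diff_distrib coeff_monom_mult)

lemma cm_step:
  fixes N :: nat and P :: "complex poly" and h :: "int \<Rightarrow> int" and a j :: nat
  assumes "\<And>j. j < N \<Longrightarrow> coeff P j = of_int (h (int j))" "\<And>t. t < 0 \<Longrightarrow> h t = 0" and j: "j < N"
  shows "coeff ((1 - monom (1::complex) a) * P) j = of_int (h (int j) - h (int j - int a))"
proof -
  show "coeff ((1 - monom (1::complex) a) * P) j = of_int (h (int j) - h (int j - int a))"
  proof (cases "a \<le> j")
    case True
    hence "int (j - a) = int j - int a" by simp
    thus ?thesis using True j assms(1)[of j] assms(1)[of "j - a"] by (simp add: coeff_one_minus_monom)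
  next
    case False thus ?thesis using j assms(1)[of j] assms(2)[of "int j - int a"] by (simp add: coeff_one_minus_monom)
  qed
qed

lemma monom_xn1_geom: "(monom (1::complex) 1 - 1) * (\<Sum>i<n. monom 1 i) = monom 1 n - 1"
proof (induction n)
  case 0 thus ?case by simp
next
  case (Suc n)
  have "(monom (1::complex) 1 - 1) * (\<Sum>i<Suc n. monom 1 i) = (monom 1 n - 1) + (monom 1 1 - 1) * monom 1 n"
    using Suc by (simp add: algebra_simps)
  also have "\<dots> = monom 1 (Suc n) - 1" by (simp add: algebra_simps mult_monom)
  finally show ?case .
qed

lemma coeff_mult_delta:
  fixes A B :: "complex poly"
  assumes "\<And>j. j \<le> n \<Longrightarrow> coeff B j = (if j = 0 then 1 else 0)"
  shows "coeff (A * B) n = coeff A n"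
proof -
  have "coeff (A * B) n = (\<Sum>i\<le>n. coeff A i * coeff B (n - i))" by (rule coeff_mult)
  also have "\<dots> = (\<Sum>i\<le>n. if i = n then coeff A i else 0)"
    using assms by (intro sum.cong refl) auto
  also have "\<dots> = coeff A n" by simp
  finally show ?thesis .
qed

lemma main_identity:
  fixes p q r :: nat
  assumes pr: "prime p" "prime q" "prime r" and d: "p \<noteq> q" "q \<noteq> r" "p \<noteq> r"
  shows "cyclo_poly (p*q*r) * ((1 - monom 1 (p*q)) * (1 - monom 1 (p*r)) * (1 - monom 1 (q*r)))
       = (1 - monom 1 (p*q*r)) * ((\<Sum>i<p. monom 1 i) * (1 - monom 1 q) * (1 - monom 1 r))"
proof -
  define x :: "complex poly" where "x = monom 1 1 - 1"
  have x0: "x \<noteq> 0" unfolding x_def using deg_xn1[of 1] by auto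
  have idt: "cyclo_poly (p*q*r) * ((monom 1 (p*q) - 1) * (monom 1 (p*r) - 1) * (monom 1 (q*r) - 1) * x)
       = (monom 1 (p*q*r) - 1) * (x * (\<Sum>i<p. monom 1 i)) * (monom 1 q - 1) * (monom 1 r - 1)"
    unfolding x_def monom_xn1_geom using cyclo_identity[OF pr d] by simp
  have "(cyclo_poly (p*q*r) * ((1 - monom 1 (p*q)) * (1 - monom 1 (p*r)) * (1 - monom 1 (q*r)))) * x
      = ((1 - monom 1 (p*q*r)) * ((\<Sum>i<p. monom 1 i) * (1 - monom 1 q) * (1 - monom 1 r))) * x"
    using idt by algebra
  thus ?thesis using x0 by simp
qed

lemma coeff_formula:
  fixes Phi :: "complex poly" and G :: "int \<Rightarrow> int" and p q r n :: nat
  assumes main: "Phi * ((1 - monom 1 (p*q)) * (1 - monom 1 (p*r)) * (1 - monom 1 (q*r)))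
       = (1 - monom 1 (p*q*r)) * ((\<Sum>i<p. monom 1 i) * (1 - monom 1 q) * (1 - monom 1 r))"
  and G0: "\<And>k. k < 0 \<Longrightarrow> G k = 0"
  and GI: "\<And>M. 0 \<le> M \<Longrightarrow> M < int (p*q*r) \<Longrightarrow>
     G M - G (M - int (q*r)) - G (M - int (p*r)) + G (M - int (q*r) - int (p*r))
     - (G (M - int (p*q)) - G (M - int (p*q) - int (q*r)) - G (M - int (p*q) - int (p*r)) + G (M - int (p*q) - int (q*r) - int (p*r)))
     = (if M = 0 then 1 else 0)"
  and n: "n < p*q*r"
  shows "coeff Phi n = of_int (\<Sum>i<p. G (int n - int i) - G (int n - int i - int q) - G (int n - int i - int r) + G (int n - int i - int r - int q))"
proof -
  define N where "N = p*q*r"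
  define C :: "complex poly" where "C = (\<Sum>M<N. monom (of_int (G (int M))) M)"
  have cC: "coeff C j = of_int (G (int j))" if "j < N" for j
    unfolding C_def using that by (simp add: coeff_sum coeff_monom)
  define h1 where "h1 t = G t - G (t - int (q*r))" for t
  define h2 where "h2 t = h1 t - h1 (t - int (p*r))" for t
  define h3 where "h3 t = h2 t - h2 (t - int (p*q))" for t
  have c1: "coeff ((1 - monom 1 (q*r)) * C) j = of_int (h1 (int j))" if "j < N" for j
    using cm_step[where N=N and P="C" and h=G and a="q*r" and j=j] cC G0 that unfolding h1_def by simp
  have h1n: "h1 t = 0" if "t < 0" for t
  proof -
    have "t - int (q*r) < 0" using that of_nat_0_le_iff[of "q*r"] by linarith
    thus ?thesis unfolding h1_def using G0 that by simp
  qed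
  have c2: "coeff ((1 - monom 1 (p*r)) * ((1 - monom 1 (q*r)) * C)) j = of_int (h2 (int j))" if "j < N" for j
    using cm_step[where N=N and P="(1 - monom 1 (q*r)) * C" and h=h1 and a="p*r" and j=j] c1 h1n that unfolding h2_def by simp
  have h2n: "h2 t = 0" if "t < 0" for t
  proof -
    have "t - int (p*r) < 0" using that of_nat_0_le_iff[of "p*r"] by linarith
    thus ?thesis unfolding h2_def using h1n that by simp
  qed
  have c3: "coeff ((1 - monom 1 (p*q)) * ((1 - monom 1 (p*r)) * ((1 - monom 1 (q*r)) * C))) j = of_int (h3 (int j))" if "j < N" for j
    using cm_step[where N=N and P="(1 - monom 1 (p*r)) * ((1 - monom 1 (q*r)) * C)" and h=h2 and a="p*q" and j=j] c2 h2n that unfolding h3_def by simp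
  have DC: "coeff (((1 - monom 1 (p*q)) * (1 - monom 1 (p*r)) * (1 - monom 1 (q*r))) * C) j = (if j = 0 then 1 else 0)"
    if "j < N" for j
  proof -
    have "coeff (((1 - monom 1 (p*q)) * (1 - monom 1 (p*r)) * (1 - monom 1 (q*r))) * C) j = of_int (h3 (int j))"
      using c3[OF that] by (simp add: mult.assoc)
    also have "h3 (int j) = (if int j = 0 then 1 else 0)"
    proof -
      have "int j < int (p*q*r)" using that unfolding N_def by (simp only: of_nat_less_iff)
      hence gi: "G (int j) - G (int j - int (q*r)) - G (int j - int (p*r)) + G (int j - int (q*r) - int (p*r))
     - (G (int j - int (p*q)) - G (int j - int (p*q) - int (q*r)) - G (int j - int (p*q) - int (p*r)) + G (int j - int (p*q) - int (q*r) - int (p*r)))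
     = (if int j = 0 then 1 else 0)" using GI[of "int j"] by simp
      show ?thesis unfolding h3_def h2_def h1_def using gi by (simp add: algebra_simps)
    qed
    finally show ?thesis by simp
  qed
  define g1 where "g1 t = G t - G (t - int r)" for t
  define g2 where "g2 t = g1 t - g1 (t - int q)" for t
  have d1: "coeff ((1 - monom 1 r) * C) j = of_int (g1 (int j))" if "j < N" for j
    using cm_step[where N=N and P="C" and h=G and a="r" and j=j] cC G0 that unfolding g1_def by simp
  have g1n: "g1 t = 0" if "t < 0" for t
  proof -
    have "t - int (r) < 0" using that by simp
    thus ?thesis unfolding g1_def using G0 that by simp
  qed
  have d2: "coeff ((1 - monom 1 q) * ((1 - monom 1 r) * C)) j = of_int (g2 (int j))" if "j < N" for j
    using cm_step[where N=N and P="(1 - monom 1 r) * C" and h=g1 and a="q" and j=j] d1 g1n that unfolding g2_def by simp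
  have g2n: "g2 t = 0" if "t < 0" for t
  proof -
    have "t - int (q) < 0" using that by simp
    thus ?thesis unfolding g2_def using g1n that by simp
  qed
  have QC: "coeff (((\<Sum>i<p. monom 1 i) * (1 - monom 1 q) * (1 - monom 1 r)) * C) n = of_int (\<Sum>i<p. g2 (int n - int i))"
  proof -
    have "((\<Sum>i<p. monom 1 i) * (1 - monom 1 q) * (1 - monom 1 r)) * C = (\<Sum>i<p. monom 1 i * ((1 - monom 1 q) * ((1 - monom 1 r) * C)))"
      by (simp add: sum_distrib_right mult.assoc mult.left_commute)
    hence "coeff (((\<Sum>i<p. monom 1 i) * (1 - monom 1 q) * (1 - monom 1 r)) * C) n
         = (\<Sum>i<p. coeff (monom 1 i * ((1 - monom 1 q) * ((1 - monom 1 r) * C))) n)"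
      by (simp add: coeff_sum)
    also have "\<dots> = (\<Sum>i<p. of_int (g2 (int n - int i)))"
    proof (intro sum.cong refl)
      fix i assume "i \<in> {..<p}"
      show "coeff (monom 1 i * ((1 - monom 1 q) * ((1 - monom 1 r) * C))) n = of_int (g2 (int n - int i))"
      proof (cases "n < i")
        case True thus ?thesis using g2n[of "int n - int i"] by (simp add: coeff_monom_mult)
      next
        case False
        hence "int (n - i) = int n - int i" by simp
        thus ?thesis using False d2[of "n - i"] n unfolding N_def by (simp add: coeff_monom_mult)
      qed
    qed
    finally show ?thesis by simp
  qed
  have eq: "Phi * (((1 - monom 1 (p*q)) * (1 - monom 1 (p*r)) * (1 - monom 1 (q*r))) * C)
      = (1 - monom 1 N) * (((\<Sum>i<p. monom 1 i) * (1 - monom 1 q) * (1 - monom 1 r)) * C)"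
    using arg_cong[OF main, of "\<lambda>x. x * C"] unfolding N_def by (simp add: mult.assoc)
  have "coeff (Phi * (((1 - monom 1 (p*q)) * (1 - monom 1 (p*r)) * (1 - monom 1 (q*r))) * C)) n = coeff Phi n"
    using n DC unfolding N_def by (intro coeff_mult_delta) auto
  moreover have "coeff ((1 - monom 1 N) * (((\<Sum>i<p. monom 1 i) * (1 - monom 1 q) * (1 - monom 1 r)) * C)) n
       = coeff (((\<Sum>i<p. monom 1 i) * (1 - monom 1 q) * (1 - monom 1 r)) * C) n"
    using n unfolding N_def by (simp add: coeff_one_minus_monom)
  ultimately have "coeff Phi n = of_int (\<Sum>i<p. g2 (int n - int i))" using eq QC by simp
  thus ?thesis unfolding g2_def g1_def by (simp add: algebra_simps)
qed

lemma cyclo_degree: "0 < N \<Longrightarrow> degree (cyclo_poly N) < N"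
proof -
  assume N: "0 < N"
  let ?S = "{k. 0 < k \<and> k < N \<and> coprime k N}"
  have fin: "finite ?S" by simp
  have "degree (cyclo_poly N) \<le> sum (degree \<circ> (\<lambda>k. [:- ((cis (2 * pi / real N)) ^ k), 1:])) ?S"
    unfolding cyclo_poly_def by (rule degree_prod_sum_le[OF fin])
  also have "\<dots> = card ?S" by simp
  also have "card ?S \<le> card {1..<N}" by (intro card_mono) auto
  also have "\<dots> < N" using N by simp
  finally show ?thesis .
qed

lemma beta_lemma:
  fixes P Qn Q' Rn R' B :: int
  assumes "[Qn*Q' = 1] (mod P)" "[Rn*R' = 1] (mod P)"
  shows "[Q'*B*Qn*Rn = 1] (mod P) \<Longrightarrow> [B = R'] (mod P)"
    and "[(P - Q')*B*Qn*Rn = 1] (mod P) \<Longrightarrow> [B = P - R'] (mod P)"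
proof -
  have bR: "[B*(Rn*R') = B*1] (mod P)" using assms(2) by (intro cong_mult cong_refl)
  {
    assume h: "[Q'*B*Qn*Rn = 1] (mod P)"
    have "[(Qn*Q')*(B*Rn) = 1*(B*Rn)] (mod P)" using assms(1) by (intro cong_mult cong_refl)
    moreover have "Q'*B*Qn*Rn = (Qn*Q')*(B*Rn)" by (simp add: algebra_simps)
    ultimately have "[B*Rn = 1] (mod P)" using h by (metis cong_sym cong_trans mult_1)
    hence "[(B*Rn)*R' = 1*R'] (mod P)" by (intro cong_mult cong_refl)
    hence "[B*(Rn*R') = R'] (mod P)" by (simp add: algebra_simps)
    thus "[B = R'] (mod P)" using bR by (metis cong_sym cong_trans mult_1_right)
  }
  {
    assume h: "[(P - Q')*B*Qn*Rn = 1] (mod P)"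
    have e: "(P - Q')*B*Qn*Rn = P*(B*Qn*Rn) - (Qn*Q')*(B*Rn)" by (simp add: algebra_simps)
    have "[P*(B*Qn*Rn) - (Qn*Q')*(B*Rn) = 0 - 1*(B*Rn)] (mod P)"
      using assms(1) by (intro cong_diff cong_mult cong_refl) (simp add: cong_def)
    hence "[- (B*Rn) = 1] (mod P)" using h e by (metis cong_sym cong_trans diff_0 mult_1)
    hence "[- (B*Rn)*R' = 1*R'] (mod P)" by (intro cong_mult cong_refl)
    hence "[- (B*(Rn*R')) = R'] (mod P)" by (simp add: algebra_simps)
    hence "[B*(Rn*R') = - R'] (mod P)" by (metis cong_minus_minus_iff minus_minus)
    hence "[B = - R'] (mod P)" using bR by (metis cong_sym cong_trans mult_1_right)
    moreover have "[- R' = P - R'] (mod P)" by (simp add: cong_def)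
    ultimately show "[B = P - R'] (mod P)" by (rule cong_trans)
  }
qed

lemma nat_case_bounds:
  fixes p q r qq rr n :: nat
  assumes pr: "prime p" "prime q" "prime r" and d: "p \<noteq> q" "q \<noteq> r" "p \<noteq> r" "p < q" "p < r"
    and qq: "1 \<le> qq" "qq \<le> p - 1" "[q*qq = 1] (mod p)" and rr: "1 \<le> rr" "rr \<le> p - 1" "[r*rr = 1] (mod p)"
  shows "qq \<le> rr \<Longrightarrow> qq + rr \<le> p \<Longrightarrow> cyclo_coeff (p*q*r) n \<le> real (min (2*qq + rr) (p - rr))
           \<and> - cyclo_coeff (p*q*r) n \<le> real (min (p + 2*qq - rr) rr)"
    and "rr \<le> qq \<Longrightarrow> p \<le> qq + rr \<Longrightarrow> cyclo_coeff (p*q*r) n \<le> real (min (2*(p - qq) + (p - rr)) (p - (p - rr)))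
           \<and> - cyclo_coeff (p*q*r) n \<le> real (min (p + 2*(p - qq) - (p - rr)) (p - rr))"
proof -
  have p2: "2 \<le> p" using pr by (simp add: prime_ge_2_nat)
  have cop: "coprime p q" "coprime q r" "coprime p r" using pr d by (auto intro: primes_coprime)
  have "coprime (int p * int r) (int q)" using cop by (simp add: coprime_commute)
  then obtain iy where iy: "[(int p * int r) * iy = 1] (mod int q)" using cong_solve_coprime_int by blast
  have "coprime (int p * int q) (int r)" using cop by (simp add: coprime_commute)
  then obtain iz where iz: "[(int p * int q) * iz = 1] (mod int r)" using cong_solve_coprime_int by blast
  have q1: "1 < q" "1 < r" using d p2 by auto
  have modinv: "(int a * int b) mod int m = 1" if "[a*b = 1] (mod m)" "1 < m" for a b m :: nat
  proof -
    have "(a*b) mod m = 1" using that by (simp add: cong_def)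
    hence "int ((a*b) mod m) = 1" by simp
    thus ?thesis by (simp add: of_nat_mod)
  qed
  interpret T: tern "int p" "int q" "int r" "int qq" "int rr" iy iz
  proof
    show "2 \<le> int p" "int p < int q" "int p < int r" using p2 d by auto
    show "coprime (int p) (int q)" "coprime (int p) (int r)" "coprime (int q) (int r)" using cop by auto
    show "1 \<le> int qq" "int qq < int p" "1 \<le> int rr" "int rr < int p" using qq rr p2 by auto
    show "int q * int qq mod int p = 1" using modinv[OF qq(3)] p2 by simp
    show "int r * int rr mod int p = 1" using modinv[OF rr(3)] p2 by simp
    show "int p * int r * iy mod int q = 1" using iy q1 by (simp add: cong_def)
    show "int p * int q * iz mod int r = 1" using iz q1 by (simp add: cong_def)
  qed
  have Npos: "0 < p*q*r" using p2 d by simp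
  have TN: "T.N = int (p*q*r)" unfolding T.N_def by simp
  have coef: "cyclo_coeff (p*q*r) n = real_of_int (\<Sum>i<nat (int p). T.tG (int n - int i))" if n: "n < p*q*r"
  proof -
    have "coeff (cyclo_poly (p*q*r)) n = of_int (\<Sum>i<p. T.Gz (int n - int i) - T.Gz (int n - int i - int q)
        - T.Gz (int n - int i - int r) + T.Gz (int n - int i - int r - int q))"
    proof (rule coeff_formula[OF main_identity[OF pr d(1-3)]])
      show "\<And>k. k < 0 \<Longrightarrow> T.Gz k = 0" by (rule T.Gz_neg)
      show "n < p*q*r" by (rule n)
      fix M :: int assume M: "0 \<le> M" "M < int (p*q*r)"
      show "T.Gz M - T.Gz (M - int (q*r)) - T.Gz (M - int (p*r)) + T.Gz (M - int (q*r) - int (p*r))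
     - (T.Gz (M - int (p*q)) - T.Gz (M - int (p*q) - int (q*r)) - T.Gz (M - int (p*q) - int (p*r)) + T.Gz (M - int (p*q) - int (q*r) - int (p*r)))
     = (if M = 0 then 1 else 0)"
        using T.GI[of M] M TN by simp
    qed
    hence "coeff (cyclo_poly (p*q*r)) n = of_int (\<Sum>i<nat (int p). T.tG (int n - int i))"
      unfolding T.tG_def by simp
    thus ?thesis unfolding cyclo_coeff_def by simp
  qed
  have zero: "cyclo_coeff (p*q*r) n = 0" if "\<not> n < p*q*r"
  proof -
    have "degree (cyclo_poly (p*q*r)) < n" using cyclo_degree[OF Npos] that by simp
    thus ?thesis unfolding cyclo_coeff_def by (simp add: coeff_eq_0)
  qed
  show "qq \<le> rr \<Longrightarrow> qq + rr \<le> p \<Longrightarrow> cyclo_coeff (p*q*r) n \<le> real (min (2*qq + rr) (p - rr))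
           \<and> - cyclo_coeff (p*q*r) n \<le> real (min (p + 2*qq - rr) rr)"
  proof -
    assume a: "qq \<le> rr" "qq + rr \<le> p"
    show ?thesis
    proof (cases "n < p*q*r")
      case False thus ?thesis using zero by simp
    next
      case True
      have "int n < int (p*q*r)" using True by (simp only: of_nat_less_iff)
      hence n: "0 \<le> int n" "int n < T.N" using TN by auto
      have w1: "(\<Sum>i<nat (int p). T.tG (int n - int i)) \<le> min (2*int qq + int rr) (int p - int rr)"
        using T.window_A(1)[of n] a n by simp
      have w2: "(\<Sum>i<nat (int p). T.tG (int n - int i)) \<ge> - min (int p + 2*int qq - int rr) (int rr)"
        using T.window_A(2)[of n] a n by simp
      have e1: "real (min (2*qq + rr) (p - rr)) = real_of_int (min (2*int qq + int rr) (int p - int rr))"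
        using a by (simp add: of_nat_diff min_def; arith)
      have e2: "real (min (p + 2*qq - rr) rr) = real_of_int (min (int p + 2*int qq - int rr) (int rr))"
        using a by (simp add: of_nat_diff min_def; arith)
      show ?thesis unfolding coef[OF True] e1 e2 using w1 w2 by linarith
    qed
  qed
  show "rr \<le> qq \<Longrightarrow> p \<le> qq + rr \<Longrightarrow> cyclo_coeff (p*q*r) n \<le> real (min (2*(p - qq) + (p - rr)) (p - (p - rr)))
           \<and> - cyclo_coeff (p*q*r) n \<le> real (min (p + 2*(p - qq) - (p - rr)) (p - rr))"
  proof -
    assume a: "rr \<le> qq" "p \<le> qq + rr"
    show ?thesis
    proof (cases "n < p*q*r")
      case False thus ?thesis using zero by simp
    next
      case True
      have "int n < int (p*q*r)" using True by (simp only: of_nat_less_iff)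
      hence n: "0 \<le> int n" "int n < T.N" using TN by auto
      have w1: "(\<Sum>i<nat (int p). T.tG (int n - int i)) \<le> min (2*(int p - int qq) + (int p - int rr)) (int p - (int p - int rr))"
        using T.window_B(1)[of n] a n by simp
      have w2: "(\<Sum>i<nat (int p). T.tG (int n - int i)) \<ge> - min (int p + 2*(int p - int qq) - (int p - int rr)) (int p - int rr)"
        using T.window_B(2)[of n] a n by simp
      have e1: "real (min (2*(p - qq) + (p - rr)) (p - (p - rr))) = real_of_int (min (2*(int p - int qq) + (int p - int rr)) (int p - (int p - int rr)))"
        using a qq rr p2 by (simp add: of_nat_diff min_def; arith)
      have e2: "real (min (p + 2*(p - qq) - (p - rr)) (p - rr)) = real_of_int (min (int p + 2*(int p - int qq) - (int p - int rr)) (int p - int rr))"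
        using a qq rr p2 by (simp add: of_nat_diff min_def; arith)
      show ?thesis unfolding coef[OF True] e1 e2 using w1 w2 by linarith
    qed
  qed
qed

lemma beta_A:
  fixes p q r q' r' b :: nat
  assumes "[q*q' = 1] (mod p)" "[r*r' = 1] (mod p)" "[q' * b * q * r = 1] (mod p)" "b < p" "r' < p"
  shows "b = r'"
proof -
  have a1: "[int q * int q' = 1] (mod int p)" using assms(1) by (metis cong_int_iff of_nat_1 of_nat_mult)
  have a2: "[int r * int r' = 1] (mod int p)" using assms(2) by (metis cong_int_iff of_nat_1 of_nat_mult)
  have a3: "[int q' * int b * int q * int r = 1] (mod int p)" using assms(3) by (metis cong_int_iff of_nat_1 of_nat_mult)
  have "[int b = int r'] (mod int p)" using beta_lemma(1)[OF a1 a2 a3] .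
  hence "[b = r'] (mod p)" by (simp add: cong_int_iff)
  thus ?thesis using assms(4,5) by (rule cong_less_modulus_unique_nat)
qed

lemma beta_B:
  fixes p q r q' r' b :: nat
  assumes "[q*q' = 1] (mod p)" "[r*r' = 1] (mod p)" "[(p - q') * b * q * r = 1] (mod p)" "b < p" "1 \<le> r'" "r' < p" "q' \<le> p"
  shows "b = p - r'"
proof -
  have a1: "[int q * int q' = 1] (mod int p)" using assms(1) by (metis cong_int_iff of_nat_1 of_nat_mult)
  have a2: "[int r * int r' = 1] (mod int p)" using assms(2) by (metis cong_int_iff of_nat_1 of_nat_mult)
  have "[int ((p - q') * b * q * r) = int 1] (mod int p)" using assms(3) by (simp only: cong_int_iff)
  hence a3: "[(int p - int q') * int b * int q * int r = 1] (mod int p)" using assms(7) by (simp add: of_nat_diff)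
  have "[int b = int p - int r'] (mod int p)" using beta_lemma(2)[OF a1 a2 a3] .
  hence "[int b = int (p - r')] (mod int p)" using assms(6) by (simp add: of_nat_diff)
  hence "[b = p - r'] (mod p)" by (simp only: cong_int_iff)
  thus ?thesis using assms(4,5,6) by (intro cong_less_modulus_unique_nat) auto
qed

theorem theorem1:
  fixes p q r q' r' \<beta> :: nat
  assumes "prime p" "prime q" "prime r"
    and "p \<noteq> q" "q \<noteq> r" "p \<noteq> r" "p < q" "p < r"
    and "1 \<le> q'" "q' \<le> p - 1" "[q * q' = 1] (mod p)"
    and "1 \<le> r'" "r' \<le> p - 1" "[r * r' = 1] (mod p)"
    and "0 < \<beta>" "\<beta> < p"
    and "[min (min q' r') (min (p - q') (p - r')) * \<beta> * q * r = 1] (mod p)"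
  shows "(\<forall>n. cyclo_coeff (p * q * r) n \<le>
            real (min (2 * min (min q' r') (min (p - q') (p - r')) + \<beta>) (p - \<beta>)))
       \<and> (\<forall>n. - cyclo_coeff (p * q * r) n \<le>
            real (min (p + 2 * min (min q' r') (min (p - q') (p - r')) - \<beta>) \<beta>))"
proof -
  define al where "al = min (min q' r') (min (p - q') (p - r'))"
  have p2: "2 \<le> p" using assms(1) by (simp add: prime_ge_2_nat)
  have hb: "[al * \<beta> * q * r = 1] (mod p)" using assms(17) unfolding al_def .
  have le: "al \<le> q'" "al \<le> r'" "al \<le> p - q'" "al \<le> p - r'" unfolding al_def by auto
  have cases: "al = q' \<or> al = r' \<or> al = p - q' \<or> al = p - r'" unfolding al_def by (auto simp: min_def)
  have qr: "p * r * q = p * q * r" by (simp add: mult_ac)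
  have "(\<forall>n. cyclo_coeff (p * q * r) n \<le> real (min (2 * al + \<beta>) (p - \<beta>)))
       \<and> (\<forall>n. - cyclo_coeff (p * q * r) n \<le> real (min (p + 2 * al - \<beta>) \<beta>))"
  proof -
    { assume c: "al = q'"
      have b: "\<beta> = r'" using beta_A[of q q' p r r' \<beta>] assms hb c by simp
      have ?thesis using nat_case_bounds(1)[of p q r q' r'] assms le c b by auto }
    moreover
    { assume c: "al = r'"
      have "[r' * \<beta> * r * q = 1] (mod p)" using hb c by (simp add: mult_ac)
      hence b: "\<beta> = q'" using beta_A[of r r' p q q' \<beta>] assms by simp
      have ?thesis using nat_case_bounds(1)[of p r q r' q'] assms le c b qr by (auto simp: add.commute) }
    moreover
    { assume c: "al = p - q'"
      have b: "\<beta> = p - r'" using beta_B[of q q' p r r' \<beta>] assms hb c by simp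
      have ?thesis using nat_case_bounds(2)[of p q r q' r'] assms le c b by auto }
    moreover
    { assume c: "al = p - r'"
      have "[(p - r') * \<beta> * r * q = 1] (mod p)" using hb c by (simp add: mult_ac)
      hence b: "\<beta> = p - q'" using beta_B[of r r' p q q' \<beta>] assms by simp
      have ?thesis using nat_case_bounds(2)[of p r q r' q'] assms le c b qr by (auto simp: add.commute) }
    ultimately show ?thesis using cases by blast
  qed
  thus ?thesis unfolding al_def .
qed

end
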